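(* Let $G$ be a finite group whose set of irreducible character degrees is $cd(G) = \{1, m\}$ and whose set of conjugacy class sizes is $cc(G) = \{1, s\}$. Then $AMZA(G) = AMZL(G)$.
   Context: $cd(G)$ is the set of degrees of irreducible complex characters of $G$ and $cc(G)$ the set of sizes of conjugacy classes. For a finite group $G$, $\mathrm{Irr}(G)$ is the set of irreducible complex characters, $d_\chi=\chi(e)$, $\mathrm{Conj}(G)$ the set of conjugacy classes, $|C|$ the class size and $\chi(C)$ the value of $\chi$ on $C$. $ZL^1(G)$ is the centre of the group algebra $L^1(G)$ and $ZA(G)$ the closed span of $\mathrm{Irr}(G)$ in the Fourier algebra $A(G)$; $AMZL(G)$, $AMZA(G)$ are their amenability constants (infimum of the bounds of bounded approximate diagonals), which for finite $G$ are given by \[ AMZL(G) = \frac{1}{|G|^2}\sum_{C,C'\in\mathrm{Conj}(G)} |C||C'|\left|\sum_{\chi\in\mathrm{Irr}(G)} d_\chi^2\,\chi(C)\overline{\chi(C')}\right|,\qquad AMZA(G) = \frac{1}{|G|^2}\sum_{\chi,\chi'\in\mathrm{Irr}(G)} d_\chi d_{\chi'}\left|\sum_{C\in\mathrm{Conj}(G)} |C|^2\,\chi(C)\overline{\chi'(C)}\right|. \] *)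

theory Defs
  imports "HOL-Algebra.Group" "Jordan_Normal_Form.Matrix"
begin

definition mat_tr :: "complex mat \<Rightarrow> complex" where
  "mat_tr A = (\<Sum>i<dim_row A. A $$ (i, i))"

definition is_rep :: "'a monoid \<Rightarrow> nat \<Rightarrow> ('a \<Rightarrow> complex mat) \<Rightarrow> bool" where
  "is_rep G n \<rho> \<longleftrightarrow>
     (\<forall>g\<in>carrier G. \<rho> g \<in> carrier_mat n n) \<and>
     \<rho> \<one>\<^bsub>G\<^esub> = 1\<^sub>m n \<and>
     (\<forall>g\<in>carrier G. \<forall>h\<in>carrier G. \<rho> (g \<otimes>\<^bsub>G\<^esub> h) = \<rho> g * \<rho> h)"

definition invariant_subspace :: "'a monoid \<Rightarrow> nat \<Rightarrow> ('a \<Rightarrow> complex mat) \<Rightarrow> complex vec set \<Rightarrow> bool" where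
  "invariant_subspace G n \<rho> W \<longleftrightarrow>
     W \<subseteq> carrier_vec n \<and> 0\<^sub>v n \<in> W \<and>
     (\<forall>v\<in>W. \<forall>w\<in>W. v + w \<in> W) \<and>
     (\<forall>c::complex. \<forall>v\<in>W. c \<cdot>\<^sub>v v \<in> W) \<and>
     (\<forall>g\<in>carrier G. \<forall>v\<in>W. \<rho> g *\<^sub>v v \<in> W)"

definition irreducible_rep :: "'a monoid \<Rightarrow> nat \<Rightarrow> ('a \<Rightarrow> complex mat) \<Rightarrow> bool" where
  "irreducible_rep G n \<rho> \<longleftrightarrow> is_rep G n \<rho> \<and> n > 0 \<and>
     (\<forall>W. invariant_subspace G n \<rho> W \<longrightarrow> W = {0\<^sub>v n} \<or> W = carrier_vec n)"

definition character_of :: "'a monoid \<Rightarrow> ('a \<Rightarrow> complex mat) \<Rightarrow> 'a \<Rightarrow> complex" where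
  "character_of G \<rho> = (\<lambda>g. if g \<in> carrier G then mat_tr (\<rho> g) else 0)"

definition Irr :: "'a monoid \<Rightarrow> ('a \<Rightarrow> complex) set" where
  "Irr G = {character_of G \<rho> | n \<rho>. irreducible_rep G n \<rho>}"

definition cd :: "'a monoid \<Rightarrow> nat set" where
  "cd G = {n. \<exists>\<rho>. irreducible_rep G n \<rho>}"

definition conj_class :: "'a monoid \<Rightarrow> 'a \<Rightarrow> 'a set" where
  "conj_class G g = {h \<otimes>\<^bsub>G\<^esub> g \<otimes>\<^bsub>G\<^esub> inv\<^bsub>G\<^esub> h | h. h \<in> carrier G}"

definition Conj :: "'a monoid \<Rightarrow> 'a set set" where
  "Conj G = conj_class G ` carrier G"

definition cc :: "'a monoid \<Rightarrow> nat set" where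
  "cc G = card ` Conj G"

definition cval :: "('a \<Rightarrow> complex) \<Rightarrow> 'a set \<Rightarrow> complex" where
  "cval \<chi> C = \<chi> (SOME g. g \<in> C)"

definition deg :: "'a monoid \<Rightarrow> ('a \<Rightarrow> complex) \<Rightarrow> complex" where
  "deg G \<chi> = \<chi> \<one>\<^bsub>G\<^esub>"

definition AMZL :: "'a monoid \<Rightarrow> real" where
  "AMZL G = (1 / real (card (carrier G)) ^ 2) *
     (\<Sum>C\<in>Conj G. \<Sum>C'\<in>Conj G. real (card C) * real (card C') *
        cmod (\<Sum>\<chi>\<in>Irr G. (deg G \<chi>)\<^sup>2 * cval \<chi> C * cnj (cval \<chi> C')))"

definition AMZA :: "'a monoid \<Rightarrow> real" where
  "AMZA G = (1 / real (card (carrier G)) ^ 2) *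
     (\<Sum>\<chi>\<in>Irr G. \<Sum>\<chi>'\<in>Irr G. cmod (deg G \<chi> * deg G \<chi>') *
        cmod (\<Sum>C\<in>Conj G. of_nat (card C ^ 2) * cval \<chi> C * cnj (cval \<chi>' C)))"

end

theory Submission
  imports Defs "Jordan_Normal_Form.Spectral_Radius"
begin

definition adj :: "complex mat \<Rightarrow> complex mat" where
  "adj A = mat (dim_col A) (dim_row A) (\<lambda>(i,j). cnj (A $$ (j,i)))"

definition ip :: "complex vec \<Rightarrow> complex vec \<Rightarrow> complex" where
  "ip v w = (\<Sum>i<dim_vec v. v$i * cnj (w$i))"

lemma adj_carrier[simp]: "A \<in> carrier_mat n m \<Longrightarrow> adj A \<in> carrier_mat m n"
  unfolding adj_def by auto

lemma adj_dims[simp]: "dim_row (adj A) = dim_col A" "dim_col (adj A) = dim_row A"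
  unfolding adj_def by auto

lemma adj_index[simp]: "i < dim_col A \<Longrightarrow> j < dim_row A \<Longrightarrow> adj A $$ (i,j) = cnj (A $$ (j,i))"
  unfolding adj_def by auto

lemma adj_adj[simp]: "adj (adj A) = A"
  by (rule eq_matI) auto

lemma adj_one[simp]: "adj (1\<^sub>m n) = 1\<^sub>m n"
  by (rule eq_matI) auto

lemma adj_mult: assumes "A \<in> carrier_mat n m" "B \<in> carrier_mat m k"
  shows "adj (A * B) = adj B * adj A"
  using assms by (intro eq_matI) (auto simp: scalar_prod_def mult.commute intro!: sum.cong)

lemma adj_smult: "adj (c \<cdot>\<^sub>m A) = cnj c \<cdot>\<^sub>m adj A"
  by (rule eq_matI) auto

lemma left_inv_le:
  fixes A B :: "complex mat"
  assumes A: "A \<in> carrier_mat e d" and B: "B \<in> carrier_mat d e" and AB: "A * B = 1\<^sub>m e"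
  shows "e \<le> d"
proof (rule ccontr)
  assume "\<not> e \<le> d" hence de: "d < e" by simp
  define A' where "A' = mat e e (\<lambda>(i,j). if j < d then A$$(i,j) else 0)"
  define B' where "B' = mat e e (\<lambda>(i,j). if i < d then B$$(i,j) else (0::complex))"
  have A': "A' \<in> carrier_mat e e" and B': "B' \<in> carrier_mat e e" unfolding A'_def B'_def by auto
  have "A' * B' = 1\<^sub>m e"
  proof (rule eq_matI)
    fix i j assume ij: "i < dim_row (1\<^sub>m e)" "j < dim_col (1\<^sub>m e)"
    have "(A' * B') $$ (i,j) = (\<Sum>k<e. (if k < d then A$$(i,k) * B$$(k,j) else 0))"
      using ij A B unfolding A'_def B'_def by (auto simp: scalar_prod_def atLeast0LessThan intro!: sum.cong)
    also have "\<dots> = (\<Sum>k<d. A$$(i,k) * B$$(k,j))"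
    proof -
      have "{..<e} \<inter> {x. x < d} = {..<d}" using de by auto
      thus ?thesis by (simp add: sum.If_cases)
    qed
    also have "\<dots> = (A * B) $$ (i,j)" using ij A B by (auto simp: scalar_prod_def atLeast0LessThan)
    finally show "(A' * B') $$ (i,j) = 1\<^sub>m e $$ (i,j)" using AB by simp
  qed (use A' B' in auto)
  hence "B' * A' = 1\<^sub>m e" using mat_mult_left_right_inverse[OF A' B'] by simp
  hence "(B' * A') $$ (e-1,e-1) = 1" using de by simp
  moreover have "(B' * A') $$ (e-1,e-1) = 0"
    using de A' B' unfolding B'_def by (auto simp: scalar_prod_def)
  ultimately show False by simp
qed

lemma ip_carrier_sum: "v \<in> carrier_vec n \<Longrightarrow> ip v w = (\<Sum>i<n. v$i * cnj (w$i))"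
  unfolding ip_def by auto

lemma ip_mult: assumes A: "A \<in> carrier_mat n m" and v: "v \<in> carrier_vec m" and w: "w \<in> carrier_vec n"
  shows "ip (A *\<^sub>v v) w = ip v (adj A *\<^sub>v w)"
proof -
  have "ip (A *\<^sub>v v) w = (\<Sum>i<n. (\<Sum>k<m. A$$(i,k) * v$k) * cnj (w$i))"
    using A v unfolding ip_def by (auto simp: scalar_prod_def atLeast0LessThan)
  also have "\<dots> = (\<Sum>k<m. v$k * cnj (\<Sum>i<n. cnj (A$$(i,k)) * w$i))"
    by (simp add: sum_distrib_left sum_distrib_right mult_ac sum.swap[of _ "{..<n}"])
  also have "\<dots> = ip v (adj A *\<^sub>v w)"
    using A v w unfolding ip_def by (auto simp: scalar_prod_def atLeast0LessThan intro!: sum.cong)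
  finally show ?thesis .
qed

lemma ip_swap: "v \<in> carrier_vec n \<Longrightarrow> w \<in> carrier_vec n \<Longrightarrow> ip w v = cnj (ip v w)"
  unfolding ip_def by (auto simp: mult.commute)

lemma ip_add_left: "v \<in> carrier_vec n \<Longrightarrow> w \<in> carrier_vec n \<Longrightarrow> ip (v + w) u = ip v u + ip w u"
  unfolding ip_def by (auto simp: distrib_right sum.distrib)

lemma ip_add_right: "v \<in> carrier_vec n \<Longrightarrow> w \<in> carrier_vec n \<Longrightarrow> u \<in> carrier_vec n \<Longrightarrow> ip u (v + w) = ip u v + ip u w"
  unfolding ip_def by (auto simp: distrib_left sum.distrib)

lemma ip_smult_left: "ip (c \<cdot>\<^sub>v v) u = c * ip v u"
  unfolding ip_def by (auto simp: sum_distrib_left mult_ac)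

lemma ip_smult_right: "v \<in> carrier_vec n \<Longrightarrow> u \<in> carrier_vec n \<Longrightarrow> ip v (c \<cdot>\<^sub>v u) = cnj c * ip v u"
  unfolding ip_def by (auto simp: sum_distrib_left mult_ac)

lemma ip_zero_right: "v \<in> carrier_vec n \<Longrightarrow> ip v (0\<^sub>v n) = 0"
  unfolding ip_def by auto

lemma ip_zero_left: "ip (0\<^sub>v n) v = 0"
  unfolding ip_def by auto

lemma ip_self: "ip v v = of_real (\<Sum>i<dim_vec v. (cmod (v$i))^2)"
  unfolding ip_def by (simp only: of_real_sum complex_norm_square)

lemma ip_self_ge: "Re (ip v v) \<ge> 0" "Im (ip v v) = 0"
  unfolding ip_self by (auto intro: sum_nonneg)

lemma ip_self_zero: assumes "v \<in> carrier_vec n" "ip v v = 0" shows "v = 0\<^sub>v n"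
proof -
  have "(\<Sum>i<dim_vec v. (cmod (v$i))^2) = 0" using assms(2) unfolding ip_self of_real_eq_0_iff by blast
  hence "\<forall>i\<in>{..<dim_vec v}. (cmod (v$i))^2 = 0" by (subst sum_nonneg_eq_0_iff[symmetric]) auto
  thus ?thesis using assms(1) by (intro eq_vecI) auto
qed

definition subsp :: "nat \<Rightarrow> complex vec set \<Rightarrow> bool" where
 "subsp N W \<longleftrightarrow> W \<subseteq> carrier_vec N \<and> 0\<^sub>v N \<in> W \<and> (\<forall>v\<in>W. \<forall>w\<in>W. v + w \<in> W) \<and> (\<forall>c. \<forall>v\<in>W. c \<cdot>\<^sub>v v \<in> W)"

definition orthonormal :: "nat \<Rightarrow> complex vec list \<Rightarrow> bool" where
 "orthonormal N us \<longleftrightarrow> set us \<subseteq> carrier_vec N \<and>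
    (\<forall>i<length us. \<forall>j<length us. ip (us!i) (us!j) = (if i = j then 1 else 0))"

lemma moc_mult_carrier[simp]: "mat_of_cols N us *\<^sub>v v \<in> carrier_vec N"
  by (simp add: carrier_dim_vec)

lemma mat_of_cols_Cons_mult:
  fixes u :: "complex vec"
  assumes u: "u \<in> carrier_vec N" and us: "set us \<subseteq> carrier_vec N" and c: "c \<in> carrier_vec (Suc (length us))"
  shows "mat_of_cols N (u#us) *\<^sub>v c = c$0 \<cdot>\<^sub>v u + mat_of_cols N us *\<^sub>v vec (length us) (\<lambda>i. c$(Suc i))"
proof (rule eq_vecI)
  fix k assume "k < dim_vec (c $ 0 \<cdot>\<^sub>v u + mat_of_cols N us *\<^sub>v vec (length us) (\<lambda>i. c $ Suc i))"
  hence k: "k < N" using u by auto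
  have "(mat_of_cols N (u#us) *\<^sub>v c) $ k = (\<Sum>j\<in>{0..<Suc (length us)}. (u#us)!j $ k * c$j)"
    using k c by (auto simp: scalar_prod_def mat_of_cols_index row_def intro!: sum.cong)
  also have "\<dots> = c$0 * u$k + (\<Sum>j\<in>{0..<length us}. us!j $ k * c$(Suc j))"
    by (subst sum.atLeast0_lessThan_Suc_shift) (simp add: mult.commute[of "u$k"])
  also have "\<dots> = (c$0 \<cdot>\<^sub>v u + mat_of_cols N us *\<^sub>v vec (length us) (\<lambda>i. c$(Suc i))) $ k"
    using k u by (auto simp: scalar_prod_def mat_of_cols_index row_def intro!: sum.cong)
  finally show "(mat_of_cols N (u#us) *\<^sub>v c) $ k = (c$0 \<cdot>\<^sub>v u + mat_of_cols N us *\<^sub>v vec (length us) (\<lambda>i. c$(Suc i))) $ k" .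
qed (use u in auto)

lemma subsp_lincomb:
  assumes W: "subsp N W" and us: "set us \<subseteq> W" and c: "c \<in> carrier_vec (length us)"
  shows "mat_of_cols N us *\<^sub>v c \<in> W"
  using us c
proof (induction us arbitrary: c)
  case Nil
  have "mat_of_cols N [] *\<^sub>v c = 0\<^sub>v N" using Nil.prems by (intro eq_vecI) (auto simp: row_def scalar_prod_def)
  thus ?case using W unfolding subsp_def by auto
next
  case (Cons u us)
  have WC: "W \<subseteq> carrier_vec N" using W unfolding subsp_def by auto
  have "mat_of_cols N (u#us) *\<^sub>v c = c$0 \<cdot>\<^sub>v u + mat_of_cols N us *\<^sub>v vec (length us) (\<lambda>i. c$(Suc i))"
    using Cons.prems WC by (intro mat_of_cols_Cons_mult) auto
  moreover have "mat_of_cols N us *\<^sub>v vec (length us) (\<lambda>i. c$(Suc i)) \<in> W"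
    using Cons by auto
  moreover have "c$0 \<cdot>\<^sub>v u \<in> W" using W Cons.prems unfolding subsp_def by auto
  ultimately show ?case using W unfolding subsp_def by auto
qed

lemma adj_cols_mult_index:
  assumes "x \<in> carrier_vec N" "i < length us"
  shows "(adj (mat_of_cols N us) *\<^sub>v x) $ i = ip x (us!i)"
  using assms unfolding ip_def by (auto simp: scalar_prod_def mat_of_cols_index row_def mult.commute intro!: sum.cong)

lemma orth_adj_mult:
  assumes "orthonormal N us"
  shows "adj (mat_of_cols N us) * mat_of_cols N us = 1\<^sub>m (length us)"
proof (rule eq_matI)
  fix i j assume ij: "i < dim_row (1\<^sub>m (length us))" "j < dim_col (1\<^sub>m (length us))"
  have c: "us!j \<in> carrier_vec N" "us!i \<in> carrier_vec N" using assms ij unfolding orthonormal_def by auto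
  have "(adj (mat_of_cols N us) * mat_of_cols N us) $$ (i,j) = ip (us!j) (us!i)"
    using ij c unfolding ip_def by (auto simp: scalar_prod_def mat_of_cols_index row_def col_def mult.commute intro!: sum.cong)
  thus "(adj (mat_of_cols N us) * mat_of_cols N us) $$ (i,j) = 1\<^sub>m (length us) $$ (i,j)"
    using assms ij unfolding orthonormal_def by auto
qed auto

lemma orth_len: assumes "orthonormal N us" shows "length us \<le> N"
  using left_inv_le[OF _ _ orth_adj_mult[OF assms]] by auto

lemma proj_orth:
  assumes o: "orthonormal N us" and x: "x \<in> carrier_vec N"
  shows "adj (mat_of_cols N us) *\<^sub>v (x - mat_of_cols N us *\<^sub>v (adj (mat_of_cols N us) *\<^sub>v x)) = 0\<^sub>v (length us)"
proof -
  let ?U = "mat_of_cols N us"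
  have U: "?U \<in> carrier_mat N (length us)" by auto
  have a: "adj ?U *\<^sub>v x \<in> carrier_vec (length us)" by (rule mult_mat_vec_carrier[OF adj_carrier[OF U] x])
  have "adj ?U *\<^sub>v (x - ?U *\<^sub>v (adj ?U *\<^sub>v x)) = adj ?U *\<^sub>v x - adj ?U *\<^sub>v (?U *\<^sub>v (adj ?U *\<^sub>v x))"
    using x U by (intro mult_minus_distrib_mat_vec) auto
  also have "adj ?U *\<^sub>v (?U *\<^sub>v (adj ?U *\<^sub>v x)) = (adj ?U * ?U) *\<^sub>v (adj ?U *\<^sub>v x)"
    using U a by (subst assoc_mult_mat_vec) auto
  also have "\<dots> = adj ?U *\<^sub>v x" using orth_adj_mult[OF o] a by simp
  finally show ?thesis using a by simp
qed

lemma orth_snoc: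
  assumes o: "orthonormal N us" and u: "u \<in> carrier_vec N" and uu: "ip u u = 1"
    and ui: "\<And>i. i < length us \<Longrightarrow> ip u (us!i) = 0"
  shows "orthonormal N (us @ [u])"
proof -
  have us: "set us \<subseteq> carrier_vec N" using o unfolding orthonormal_def by auto
  have iu: "ip (us!i) u = 0" if "i < length us" for i
  proof -
    have "us!i \<in> carrier_vec N" using us that by auto
    thus ?thesis using ui[OF that] ip_swap[of u N "us!i"] u by simp
  qed
  show ?thesis unfolding orthonormal_def
  proof (intro conjI allI impI)
    show "set (us @ [u]) \<subseteq> carrier_vec N" using us u by auto
    fix i j assume "i < length (us @ [u])" "j < length (us @ [u])"
    thus "ip ((us @ [u]) ! i) ((us @ [u]) ! j) = (if i = j then 1 else 0)"
      using o ui iu uu unfolding orthonormal_def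
      by (cases "i < length us"; cases "j < length us") (auto simp: nth_append)
  qed
qed

lemma orth_basis:
  assumes W: "subsp N W"
  shows "\<exists>us. orthonormal N us \<and> set us \<subseteq> W \<and>
     (\<forall>x\<in>W. mat_of_cols N us *\<^sub>v (adj (mat_of_cols N us) *\<^sub>v x) = x)"
proof -
  have WC: "W \<subseteq> carrier_vec N" using W unfolding subsp_def by auto
  define P where "P L \<longleftrightarrow> (\<exists>us. length us = L \<and> orthonormal N us \<and> set us \<subseteq> W)" for L
  have P0: "P 0" unfolding P_def orthonormal_def by auto
  have Pb: "P L \<Longrightarrow> L \<le> N" for L unfolding P_def using orth_len by auto
  define L0 where "L0 = (GREATEST L. P L)"
  have "P L0" unfolding L0_def by (rule GreatestI_nat[of P 0 N, OF P0 Pb])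
  then obtain us where us: "length us = L0" "orthonormal N us" "set us \<subseteq> W" unfolding P_def by auto
  have max: "P L \<Longrightarrow> L \<le> L0" for L unfolding L0_def by (rule Greatest_le_nat[of P L N, OF _ Pb])
  let ?U = "mat_of_cols N us"
  have U: "?U \<in> carrier_mat N (length us)" by auto
  have "\<forall>x\<in>W. ?U *\<^sub>v (adj ?U *\<^sub>v x) = x"
  proof (rule ccontr)
    assume "\<not> ?thesis"
    then obtain x where xW: "x \<in> W" and ne: "?U *\<^sub>v (adj ?U *\<^sub>v x) \<noteq> x" by auto
    have x: "x \<in> carrier_vec N" using xW WC by auto
    define p where "p = ?U *\<^sub>v (adj ?U *\<^sub>v x)"
    have p: "p \<in> carrier_vec N" unfolding p_def using U x by auto
    have pW: "p \<in> W" unfolding p_def using subsp_lincomb[OF W us(3)] mult_mat_vec_carrier[OF adj_carrier[OF U] x] by auto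
    define y where "y = x + (-1) \<cdot>\<^sub>v p"
    have yW: "y \<in> W" unfolding y_def using W xW pW unfolding subsp_def by auto
    have y: "y \<in> carrier_vec N" using yW WC by auto
    have yxp: "y = x - p" unfolding y_def using x p by (intro eq_vecI) auto
    have y0: "y \<noteq> 0\<^sub>v N"
    proof
      assume h: "y = 0\<^sub>v N"
      have "x = p"
      proof (rule eq_vecI)
        fix i assume i: "i < dim_vec p"
        have "(x - p) $ i = 0" using h yxp p i by simp
        thus "x$i = p$i" using p x i by simp
      qed (use x p in simp)
      thus False using ne unfolding p_def by simp
    qed
    have yorth: "ip y (us!i) = 0" if "i < length us" for i
    proof -
      have "ip y (us!i) = (adj ?U *\<^sub>v y) $ i" using adj_cols_mult_index[OF y that] by simp
      also have "\<dots> = 0" unfolding yxp p_def using proj_orth[OF us(2) x] that by simp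
      finally show ?thesis .
    qed
    define r where "r = Re (ip y y)"
    have yy: "ip y y = of_real r" unfolding r_def using ip_self_ge(2)[of y] by (simp add: complex_eq_iff)
    have r0: "r > 0" using ip_self_ge(1)[of y] ip_self_zero[OF y] y0 yy unfolding r_def by force
    define u where "u = complex_of_real (1 / sqrt r) \<cdot>\<^sub>v y"
    have u: "u \<in> carrier_vec N" using y unfolding u_def by auto
    have uW: "u \<in> W" using W yW unfolding u_def subsp_def by auto
    have uu: "ip u u = 1"
    proof -
      have cc: "cnj (complex_of_real (1 / sqrt r)) = complex_of_real (1 / sqrt r)" by simp
      have "ip u u = complex_of_real (1/sqrt r) * (complex_of_real (1/sqrt r) * complex_of_real r)"
        unfolding u_def ip_smult_left ip_smult_right[OF y y] yy cc by (rule refl)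
      also have "\<dots> = complex_of_real ((1 / sqrt r) * ((1 / sqrt r) * r))" by (simp only: of_real_mult)
      also have "(1 / sqrt r) * ((1 / sqrt r) * r) = 1"
      proof -
        have "sqrt r * sqrt r = r" using r0 by simp
        thus ?thesis using r0 by (simp add: field_simps)
      qed
      finally show ?thesis by simp
    qed
    have ui: "ip u (us!i) = 0" if "i < length us" for i
      unfolding u_def ip_smult_left using yorth[OF that] by simp
    have "orthonormal N (us @ [u])" by (rule orth_snoc[OF us(2) u uu ui])
    hence "P (Suc L0)" unfolding P_def using us uW by (intro exI[of _ "us @ [u]"]) auto
    thus False using max by force
  qed
  thus ?thesis using us by auto
qed

definition msum :: "nat \<Rightarrow> nat \<Rightarrow> ('b \<Rightarrow> complex mat) \<Rightarrow> 'b set \<Rightarrow> complex mat" where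
  "msum r c F S = mat r c (\<lambda>(i,j). \<Sum>g\<in>S. F g $$ (i,j))"

lemma msum_carrier[simp]: "msum r c F S \<in> carrier_mat r c"
  unfolding msum_def by auto

lemma msum_dims[simp]: "dim_row (msum r c F S) = r" "dim_col (msum r c F S) = c"
  unfolding msum_def by auto

lemma msum_index[simp]: "i < r \<Longrightarrow> j < c \<Longrightarrow> msum r c F S $$ (i,j) = (\<Sum>g\<in>S. F g $$ (i,j))"
  unfolding msum_def by auto

lemma msum_mult_left:
  assumes B: "B \<in> carrier_mat k r" and F: "\<And>g. g \<in> S \<Longrightarrow> F g \<in> carrier_mat r c"
  shows "B * msum r c F S = msum k c (\<lambda>g. B * F g) S"
proof (rule eq_matI)
  fix i j assume ij: "i < dim_row (msum k c (\<lambda>g. B * F g) S)" "j < dim_col (msum k c (\<lambda>g. B * F g) S)"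
  have "(B * msum r c F S) $$ (i,j) = (\<Sum>l<r. B$$(i,l) * (\<Sum>g\<in>S. F g $$ (l,j)))"
    using ij B by (auto simp: scalar_prod_def atLeast0LessThan intro!: sum.cong)
  also have "\<dots> = (\<Sum>g\<in>S. \<Sum>l<r. B$$(i,l) * F g $$ (l,j))"
    by (simp add: sum_distrib_left sum.swap[of _ S])
  also have "\<dots> = msum k c (\<lambda>g. B * F g) S $$ (i,j)"
    using ij B by (auto simp: scalar_prod_def atLeast0LessThan dest!: F intro!: sum.cong)
  finally show "(B * msum r c F S) $$ (i,j) = msum k c (\<lambda>g. B * F g) S $$ (i,j)" .
qed (use B in auto)

lemma msum_mult_right:
  assumes B: "B \<in> carrier_mat c k" and F: "\<And>g. g \<in> S \<Longrightarrow> F g \<in> carrier_mat r c"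
  shows "msum r c F S * B = msum r k (\<lambda>g. F g * B) S"
proof (rule eq_matI)
  fix i j assume ij: "i < dim_row (msum r k (\<lambda>g. F g * B) S)" "j < dim_col (msum r k (\<lambda>g. F g * B) S)"
  have "(msum r c F S * B) $$ (i,j) = (\<Sum>l<c. (\<Sum>g\<in>S. F g $$ (i,l)) * B$$(l,j))"
    using ij B by (auto simp: scalar_prod_def atLeast0LessThan intro!: sum.cong)
  also have "\<dots> = (\<Sum>g\<in>S. \<Sum>l<c. F g $$ (i,l) * B$$(l,j))"
    by (simp add: sum_distrib_right sum.swap[of _ S])
  also have "\<dots> = msum r k (\<lambda>g. F g * B) S $$ (i,j)"
    using ij B by (auto simp: scalar_prod_def atLeast0LessThan dest!: F intro!: sum.cong)
  finally show "(msum r c F S * B) $$ (i,j) = msum r k (\<lambda>g. F g * B) S $$ (i,j)" .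
qed (use B in auto)

lemma msum_cong: "(\<And>g. g \<in> S \<Longrightarrow> F g = F' g) \<Longrightarrow> msum r c F S = msum r c F' S"
  unfolding msum_def by (intro eq_matI) auto

lemma msum_reindex:
  assumes "bij_betw h S S"
  shows "msum r c (\<lambda>g. F (h g)) S = msum r c F S"
  unfolding msum_def using sum.reindex_bij_betw[OF assms] by (intro eq_matI) auto

lemma mat_eq_by_vec:
  fixes A B :: "complex mat"
  assumes A: "A \<in> carrier_mat n m" and B: "B \<in> carrier_mat n m"
    and eq: "\<And>x. x \<in> carrier_vec m \<Longrightarrow> A *\<^sub>v x = B *\<^sub>v x"
  shows "A = B"
proof (rule eq_matI)
  fix i j assume ij: "i < dim_row B" "j < dim_col B"
  have "A $$ (i,j) = (A *\<^sub>v unit_vec m j) $ i" using A ij B by (auto simp: scalar_prod_right_unit)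
  also have "\<dots> = (B *\<^sub>v unit_vec m j) $ i" using eq[of "unit_vec m j"] by simp
  also have "\<dots> = B $$ (i,j)" using B ij by (auto simp: scalar_prod_right_unit)
  finally show "A $$ (i,j) = B $$ (i,j)" .
qed (use A B in auto)

definition urep :: "'a monoid \<Rightarrow> nat \<Rightarrow> ('a \<Rightarrow> complex mat) \<Rightarrow> bool" where
  "urep G N \<rho> \<longleftrightarrow> is_rep G N \<rho> \<and> (\<forall>g\<in>carrier G. adj (\<rho> g) = \<rho> (inv\<^bsub>G\<^esub> g))"

lemma subsp_minus:
  assumes W: "subsp N W" and x: "x \<in> W" and y: "y \<in> W"
  shows "x - y \<in> W"
proof -
  have WC: "W \<subseteq> carrier_vec N" using W unfolding subsp_def by auto
  have "x + (-1) \<cdot>\<^sub>v y \<in> W" using W x y unfolding subsp_def by auto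
  moreover have "x + (-1) \<cdot>\<^sub>v y = x - y" using x y WC by (intro eq_vecI) auto
  ultimately show ?thesis by simp
qed

lemma orth_full:
  assumes o: "orthonormal N us" and len: "length us = N" and W: "subsp N W" and us: "set us \<subseteq> W"
  shows "W = carrier_vec N"
proof -
  let ?U = "mat_of_cols N us"
  have U: "?U \<in> carrier_mat N N" using len by auto
  have "adj ?U * ?U = 1\<^sub>m N" using orth_adj_mult[OF o] len by simp
  hence UU: "?U * adj ?U = 1\<^sub>m N" using mat_mult_left_right_inverse[OF adj_carrier[OF U] U] by simp
  have "x \<in> W" if x: "x \<in> carrier_vec N" for x
  proof -
    have "?U *\<^sub>v (adj ?U *\<^sub>v x) = x" using UU x U by (subst assoc_mult_mat_vec[symmetric]) auto
    moreover have "?U *\<^sub>v (adj ?U *\<^sub>v x) \<in> W"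
      using subsp_lincomb[OF W us] mult_mat_vec_carrier[OF adj_carrier[OF U] x] len by auto
    ultimately show ?thesis by simp
  qed
  thus ?thesis using W unfolding subsp_def by auto
qed

lemma subrep:
  assumes ur: "urep G N \<rho>" and G: "group G" and o: "orthonormal N us" and usW: "set us \<subseteq> W"
    and proj: "\<forall>x\<in>W. mat_of_cols N us *\<^sub>v (adj (mat_of_cols N us) *\<^sub>v x) = x"
    and inv: "\<forall>g\<in>carrier G. \<forall>w\<in>W. \<rho> g *\<^sub>v w \<in> W"
  shows "\<forall>g\<in>carrier G. \<rho> g * mat_of_cols N us = mat_of_cols N us * (adj (mat_of_cols N us) * \<rho> g * mat_of_cols N us)"
    and "urep G (length us) (\<lambda>g. adj (mat_of_cols N us) * \<rho> g * mat_of_cols N us)"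
proof -
  let ?U = "mat_of_cols N us"
  let ?q = "length us"
  have U: "?U \<in> carrier_mat N ?q" by auto
  have aU: "adj ?U \<in> carrier_mat ?q N" by auto
  have rep: "is_rep G N \<rho>" and un: "\<And>g. g \<in> carrier G \<Longrightarrow> adj (\<rho> g) = \<rho> (inv\<^bsub>G\<^esub> g)"
    using ur unfolding urep_def by auto
  have rc: "\<And>g. g \<in> carrier G \<Longrightarrow> \<rho> g \<in> carrier_mat N N" using rep unfolding is_rep_def by auto
  have usc: "\<And>j. j < ?q \<Longrightarrow> us!j \<in> carrier_vec N" using o unfolding orthonormal_def by auto
  have comm: "\<rho> g * ?U = ?U * (adj ?U * \<rho> g * ?U)" if g: "g \<in> carrier G" for g
  proof (rule mat_col_eqI)
    fix j assume j: "j < dim_col (?U * (adj ?U * \<rho> g * ?U))"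
    hence j': "j < ?q" by simp
    have "col (\<rho> g * ?U) j = \<rho> g *\<^sub>v us!j"
      using col_mult2[OF rc[OF g] U j'] col_mat_of_cols[OF j' usc[OF j']] by simp
    also have "\<dots> = ?U *\<^sub>v (adj ?U *\<^sub>v (\<rho> g *\<^sub>v us!j))"
      using proj inv g usW j' by (metis nth_mem subsetD)
    also have "\<dots> = col (?U * (adj ?U * \<rho> g * ?U)) j"
    proof -
      have "col (?U * (adj ?U * \<rho> g * ?U)) j = ?U *\<^sub>v col (adj ?U * \<rho> g * ?U) j"
        using col_mult2[OF U _ j'] aU rc[OF g] U by (metis mult_carrier_mat)
      also have "col (adj ?U * \<rho> g * ?U) j = (adj ?U * \<rho> g) *\<^sub>v us!j"
        using col_mult2[OF _ U j'] col_mat_of_cols[OF j' usc[OF j']] aU rc[OF g] by (metis mult_carrier_mat)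
      also have "\<dots> = adj ?U *\<^sub>v (\<rho> g *\<^sub>v us!j)"
        using aU rc[OF g] usc[OF j'] by (rule assoc_mult_mat_vec)
      finally show ?thesis by simp
    qed
    finally show "col (\<rho> g * ?U) j = col (?U * (adj ?U * \<rho> g * ?U)) j" .
  qed (use rc[OF g] in auto)
  thus "\<forall>g\<in>carrier G. \<rho> g * ?U = ?U * (adj ?U * \<rho> g * ?U)" by auto
  define \<sigma> where "\<sigma> g = adj ?U * \<rho> g * ?U" for g
  have sc: "\<And>g. g \<in> carrier G \<Longrightarrow> \<sigma> g \<in> carrier_mat ?q ?q" unfolding \<sigma>_def using rc aU U by (metis mult_carrier_mat)
  have UU: "adj ?U * ?U = 1\<^sub>m ?q" by (rule orth_adj_mult[OF o])
  have one: "\<sigma> \<one>\<^bsub>G\<^esub> = 1\<^sub>m ?q"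
    using rep UU aU unfolding \<sigma>_def is_rep_def by simp
  have mult: "\<sigma> (g \<otimes>\<^bsub>G\<^esub> h) = \<sigma> g * \<sigma> h" if g: "g \<in> carrier G" and h: "h \<in> carrier G" for g h
  proof -
    have "\<sigma> (g \<otimes>\<^bsub>G\<^esub> h) = adj ?U * (\<rho> g * \<rho> h) * ?U" using rep g h unfolding \<sigma>_def is_rep_def by simp
    also have "\<dots> = adj ?U * \<rho> g * (\<rho> h * ?U)"
    proof -
      have "adj ?U * (\<rho> g * \<rho> h) = adj ?U * \<rho> g * \<rho> h" by (rule assoc_mult_mat[symmetric, OF aU rc[OF g] rc[OF h]])
      moreover have "adj ?U * \<rho> g * \<rho> h * ?U = adj ?U * \<rho> g * (\<rho> h * ?U)"
        using mult_carrier_mat[OF aU rc[OF g]] rc[OF h] U by (rule assoc_mult_mat)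
      ultimately show ?thesis by simp
    qed
    also have "\<dots> = adj ?U * \<rho> g * (?U * \<sigma> h)" using comm[OF h] unfolding \<sigma>_def by simp
    also have "\<dots> = \<sigma> g * \<sigma> h"
      unfolding \<sigma>_def by (rule assoc_mult_mat[symmetric, OF mult_carrier_mat[OF aU rc[OF g]] U sc[OF h, unfolded \<sigma>_def]])
    finally show ?thesis .
  qed
  have adjs: "adj (\<sigma> g) = \<sigma> (inv\<^bsub>G\<^esub> g)" if g: "g \<in> carrier G" for g
  proof -
    have "adj (\<sigma> g) = adj ?U * adj (adj ?U * \<rho> g)"
      unfolding \<sigma>_def using adj_mult[OF _ U] aU rc[OF g] by (metis mult_carrier_mat)
    also have "adj (adj ?U * \<rho> g) = adj (\<rho> g) * ?U" using adj_mult[OF aU rc[OF g]] by simp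
    also have "adj ?U * (adj (\<rho> g) * ?U) = \<sigma> (inv\<^bsub>G\<^esub> g)"
      unfolding \<sigma>_def un[OF g] by (rule assoc_mult_mat[symmetric, OF aU rc[OF group.inv_closed[OF G g]] U])
    finally show ?thesis .
  qed
  show "urep G ?q \<sigma>" unfolding urep_def is_rep_def using sc one mult adjs by auto
qed

lemma ip_U_right:
  assumes "orthonormal N us" "y \<in> carrier_vec N" "a \<in> carrier_vec (length us)"
  shows "ip y (mat_of_cols N us *\<^sub>v a) = ip (adj (mat_of_cols N us) *\<^sub>v y) a"
  using ip_mult[of "adj (mat_of_cols N us)" "length us" N y a] assms by simp

lemma compl_id:
  assumes W: "subsp N W"
    and o1: "orthonormal N us" and us: "set us \<subseteq> W"
    and p1: "\<forall>x\<in>W. mat_of_cols N us *\<^sub>v (adj (mat_of_cols N us) *\<^sub>v x) = x"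
    and W'def: "W' = {v \<in> carrier_vec N. \<forall>w\<in>W. ip v w = 0}"
    and o2: "orthonormal N vs" and vs: "set vs \<subseteq> W'"
    and p2: "\<forall>x\<in>W'. mat_of_cols N vs *\<^sub>v (adj (mat_of_cols N vs) *\<^sub>v x) = x"
  shows "mat_of_cols N us * adj (mat_of_cols N us) + mat_of_cols N vs * adj (mat_of_cols N vs) = 1\<^sub>m N"
proof -
  let ?U1 = "mat_of_cols N us" and ?U2 = "mat_of_cols N vs"
  have U1: "?U1 \<in> carrier_mat N (length us)" and U2: "?U2 \<in> carrier_mat N (length vs)" by auto
  have WC: "W \<subseteq> carrier_vec N" using W unfolding subsp_def by auto
  show ?thesis
  proof (rule mat_eq_by_vec)
    show "?U1 * adj ?U1 + ?U2 * adj ?U2 \<in> carrier_mat N N" using U1 U2 by auto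
    show "1\<^sub>m N \<in> carrier_mat N N" by simp
    fix x :: "complex vec" assume x: "x \<in> carrier_vec N"
    define a where "a = adj ?U1 *\<^sub>v x"
    have a: "a \<in> carrier_vec (length us)" unfolding a_def by (rule mult_mat_vec_carrier[OF adj_carrier[OF U1] x])
    define p where "p = ?U1 *\<^sub>v a"
    have p: "p \<in> carrier_vec N" unfolding p_def by simp
    have pW: "p \<in> W" unfolding p_def using subsp_lincomb[OF W us a] .
    define y where "y = x - p"
    have y: "y \<in> carrier_vec N" unfolding y_def using x p by simp
    have xpy: "x = p + y" unfolding y_def using x p by (intro eq_vecI) auto
    have yW': "y \<in> W'"
    proof -
      have "ip y w = 0" if w: "w \<in> W" for w
      proof -
        have wc: "w \<in> carrier_vec N" using w WC by auto
        have "ip y w = ip y (?U1 *\<^sub>v (adj ?U1 *\<^sub>v w))" using p1 w by simp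
        also have "\<dots> = ip (adj ?U1 *\<^sub>v y) (adj ?U1 *\<^sub>v w)"
          using ip_U_right[OF o1 y mult_mat_vec_carrier[OF adj_carrier[OF U1] wc]] by simp
        also have "adj ?U1 *\<^sub>v y = 0\<^sub>v (length us)" unfolding y_def p_def a_def using proj_orth[OF o1 x] by simp
        finally show ?thesis by (simp add: ip_zero_left)
      qed
      thus ?thesis unfolding W'def using y by auto
    qed
    have "adj ?U2 *\<^sub>v p = 0\<^sub>v (length vs)"
    proof (rule eq_vecI)
      fix i assume "i < dim_vec (0\<^sub>v (length vs))"
      hence i: "i < length vs" by simp
      have vi: "vs!i \<in> W'" using vs i by auto
      have vic: "vs!i \<in> carrier_vec N" using vi unfolding W'def by auto
      have "(adj ?U2 *\<^sub>v p) $ i = ip p (vs!i)" by (rule adj_cols_mult_index[OF p i])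
      also have "\<dots> = cnj (ip (vs!i) p)" using ip_swap[OF vic p] .
      also have "ip (vs!i) p = 0" using vi pW unfolding W'def by auto
      finally show "(adj ?U2 *\<^sub>v p) $ i = 0\<^sub>v (length vs) $ i" using i by simp
    qed simp
    hence "adj ?U2 *\<^sub>v x = adj ?U2 *\<^sub>v y"
      unfolding xpy using mult_add_distrib_mat_vec[OF adj_carrier[OF U2] p y] mult_mat_vec_carrier[OF adj_carrier[OF U2] y] by simp
    hence "?U2 *\<^sub>v (adj ?U2 *\<^sub>v x) = y" using p2 yW' by simp
    hence "(?U1 * adj ?U1 + ?U2 * adj ?U2) *\<^sub>v x = p + y"
      using add_mult_distrib_mat_vec[of "?U1 * adj ?U1" N N "?U2 * adj ?U2" x] U1 U2 x
      unfolding p_def a_def using assoc_mult_mat_vec[OF U1 adj_carrier[OF U1] x] assoc_mult_mat_vec[OF U2 adj_carrier[OF U2] x] by auto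
    thus "(?U1 * adj ?U1 + ?U2 * adj ?U2) *\<^sub>v x = 1\<^sub>m N *\<^sub>v x" using xpy x by simp
  qed
qed

lemma decomp:
  assumes G: "group G"
    and H: "\<forall>d \<sigma>. irreducible_rep G d \<sigma> \<longrightarrow> msum d d (\<lambda>g. h g \<cdot>\<^sub>m \<sigma> g) (carrier G) = 0\<^sub>m d d"
  shows "urep G N \<rho> \<Longrightarrow> msum N N (\<lambda>g. h g \<cdot>\<^sub>m \<rho> g) (carrier G) = 0\<^sub>m N N"
proof (induction N arbitrary: \<rho> rule: less_induct)
  case (less N \<rho>)
  have rep: "is_rep G N \<rho>" and un: "\<And>g. g \<in> carrier G \<Longrightarrow> adj (\<rho> g) = \<rho> (inv\<^bsub>G\<^esub> g)"
    using less.prems unfolding urep_def by auto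
  have rc: "\<And>g. g \<in> carrier G \<Longrightarrow> \<rho> g \<in> carrier_mat N N" using rep unfolding is_rep_def by auto
  show ?case
  proof (cases "N = 0")
    case True thus ?thesis by (intro eq_matI) auto
  next
    case N0: False
    show ?thesis
    proof (cases "irreducible_rep G N \<rho>")
      case True thus ?thesis using H by auto
    next
      case False
      then obtain W where inv: "invariant_subspace G N \<rho> W" and W0: "W \<noteq> {0\<^sub>v N}" and WN: "W \<noteq> carrier_vec N"
        using rep N0 unfolding irreducible_rep_def by auto
      have W: "subsp N W" using inv unfolding invariant_subspace_def subsp_def by auto
      have Winv: "\<forall>g\<in>carrier G. \<forall>w\<in>W. \<rho> g *\<^sub>v w \<in> W" using inv unfolding invariant_subspace_def by auto
      have WC: "W \<subseteq> carrier_vec N" using W unfolding subsp_def by auto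
      define W' where "W' = {v \<in> carrier_vec N. \<forall>w\<in>W. ip v w = 0}"
      have W': "subsp N W'" unfolding subsp_def W'_def
        using WC by (auto simp: ip_add_left ip_smult_left ip_zero_left)
      have W'inv: "\<forall>g\<in>carrier G. \<forall>v\<in>W'. \<rho> g *\<^sub>v v \<in> W'"
      proof (intro ballI)
        fix g v assume g: "g \<in> carrier G" and v: "v \<in> W'"
        have vc: "v \<in> carrier_vec N" using v unfolding W'_def by auto
        have "ip (\<rho> g *\<^sub>v v) w = 0" if w: "w \<in> W" for w
        proof -
          have "ip (\<rho> g *\<^sub>v v) w = ip v (adj (\<rho> g) *\<^sub>v w)" using ip_mult[OF rc[OF g] vc] w WC by auto
          also have "\<dots> = ip v (\<rho> (inv\<^bsub>G\<^esub> g) *\<^sub>v w)" using un g by simp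
          also have "\<dots> = 0" using v Winv group.inv_closed[OF G g] w unfolding W'_def by auto
          finally show ?thesis .
        qed
        thus "\<rho> g *\<^sub>v v \<in> W'" unfolding W'_def using rc[OF g] vc by auto
      qed
      obtain us where us: "orthonormal N us" "set us \<subseteq> W" "\<forall>x\<in>W. mat_of_cols N us *\<^sub>v (adj (mat_of_cols N us) *\<^sub>v x) = x"
        using orth_basis[OF W] by blast
      obtain vs where vs: "orthonormal N vs" "set vs \<subseteq> W'" "\<forall>x\<in>W'. mat_of_cols N vs *\<^sub>v (adj (mat_of_cols N vs) *\<^sub>v x) = x"
        using orth_basis[OF W'] by blast
      let ?U1 = "mat_of_cols N us" and ?U2 = "mat_of_cols N vs"
      have U1: "?U1 \<in> carrier_mat N (length us)" and U2: "?U2 \<in> carrier_mat N (length vs)" by auto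
      have q1: "length us < N"
        using orth_len[OF us(1)] orth_full[OF us(1) _ W us(2)] WN by fastforce
      have q2: "length vs < N"
      proof -
        have "length vs \<noteq> N"
        proof
          assume "length vs = N"
          hence W'C: "W' = carrier_vec N" using orth_full[OF vs(1) _ W' vs(2)] by simp
          have "W \<subseteq> {0\<^sub>v N}"
          proof
            fix w assume w: "w \<in> W"
            hence "w \<in> W'" using WC W'C by auto
            hence "ip w w = 0" using w unfolding W'_def by auto
            thus "w \<in> {0\<^sub>v N}" using ip_self_zero[of w N] w WC by auto
          qed
          thus False using W0 W unfolding subsp_def by auto
        qed
        thus ?thesis using orth_len[OF vs(1)] by simp
      qed
      define T where "T = msum N N (\<lambda>g. h g \<cdot>\<^sub>m \<rho> g) (carrier G)"
      have T: "T \<in> carrier_mat N N" unfolding T_def by simp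
      have TU: "T * mat_of_cols N ws = 0\<^sub>m N (length ws)"
        if o: "orthonormal N ws" and wsV: "set ws \<subseteq> V"
          and pV: "\<forall>x\<in>V. mat_of_cols N ws *\<^sub>v (adj (mat_of_cols N ws) *\<^sub>v x) = x"
          and iV: "\<forall>g\<in>carrier G. \<forall>w\<in>V. \<rho> g *\<^sub>v w \<in> V" and len: "length ws < N" for ws V
      proof -
        let ?U = "mat_of_cols N ws"
        have U: "?U \<in> carrier_mat N (length ws)" by auto
        note sr = subrep[OF less.prems G o wsV pV iV]
        have IH: "msum (length ws) (length ws) (\<lambda>g. h g \<cdot>\<^sub>m (adj ?U * \<rho> g * ?U)) (carrier G) = 0\<^sub>m (length ws) (length ws)"
          using less.IH[OF len sr(2)] .
        have sc: "\<And>g. g \<in> carrier G \<Longrightarrow> adj ?U * \<rho> g * ?U \<in> carrier_mat (length ws) (length ws)"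
          using sr(2) unfolding urep_def is_rep_def by auto
        have "T * ?U = msum N (length ws) (\<lambda>g. (h g \<cdot>\<^sub>m \<rho> g) * ?U) (carrier G)"
          unfolding T_def using U rc by (intro msum_mult_right) auto
        also have "\<dots> = msum N (length ws) (\<lambda>g. ?U * (h g \<cdot>\<^sub>m (adj ?U * \<rho> g * ?U))) (carrier G)"
        proof (rule msum_cong)
          fix g assume g: "g \<in> carrier G"
          have "(h g \<cdot>\<^sub>m \<rho> g) * ?U = h g \<cdot>\<^sub>m (\<rho> g * ?U)" using rc[OF g] U by (rule mult_smult_assoc_mat)
          also have "\<dots> = h g \<cdot>\<^sub>m (?U * (adj ?U * \<rho> g * ?U))" using sr(1) g by simp
          also have "\<dots> = ?U * (h g \<cdot>\<^sub>m (adj ?U * \<rho> g * ?U))" by (rule mult_smult_distrib[symmetric, OF U sc[OF g]])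
          finally show "(h g \<cdot>\<^sub>m \<rho> g) * ?U = ?U * (h g \<cdot>\<^sub>m (adj ?U * \<rho> g * ?U))" .
        qed
        also have "\<dots> = ?U * msum (length ws) (length ws) (\<lambda>g. h g \<cdot>\<^sub>m (adj ?U * \<rho> g * ?U)) (carrier G)"
          using U sc by (intro msum_mult_left[symmetric]) auto
        also have "\<dots> = 0\<^sub>m N (length ws)" unfolding IH using U by simp
        finally show ?thesis .
      qed
      have T1: "T * ?U1 = 0\<^sub>m N (length us)" using TU[OF us(1) us(2) us(3) Winv q1] .
      have T2: "T * ?U2 = 0\<^sub>m N (length vs)" using TU[OF vs(1) vs(2) vs(3) W'inv q2] .
      have id: "?U1 * adj ?U1 + ?U2 * adj ?U2 = 1\<^sub>m N"
        by (rule compl_id[OF W us(1) us(2) us(3) W'_def vs(1) vs(2) vs(3)])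
      have "T = T * (?U1 * adj ?U1 + ?U2 * adj ?U2)" unfolding id using T by simp
      also have "\<dots> = T * ?U1 * adj ?U1 + T * ?U2 * adj ?U2"
        using mult_add_distrib_mat[OF T mult_carrier_mat[OF U1 adj_carrier[OF U1]] mult_carrier_mat[OF U2 adj_carrier[OF U2]]]
          assoc_mult_mat[symmetric, OF T U1 adj_carrier[OF U1]] assoc_mult_mat[symmetric, OF T U2 adj_carrier[OF U2]] by simp
      also have "\<dots> = 0\<^sub>m N N" unfolding T1 T2 using U1 U2 by simp
      finally show ?thesis unfolding T_def .
    qed
  qed
qed

lemma mat_tr_comm:
  assumes X: "X \<in> carrier_mat n m" and Y: "Y \<in> carrier_mat m n"
  shows "mat_tr (X * Y) = mat_tr (Y * X)"
proof -
  have "mat_tr (X * Y) = (\<Sum>i<n. \<Sum>k<m. X$$(i,k) * Y$$(k,i))"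
    using X Y unfolding mat_tr_def by (auto simp: scalar_prod_def atLeast0LessThan)
  also have "\<dots> = (\<Sum>k<m. \<Sum>i<n. Y$$(k,i) * X$$(i,k))"
    by (subst sum.swap) (simp add: mult.commute)
  also have "\<dots> = mat_tr (Y * X)"
    using X Y unfolding mat_tr_def by (auto simp: scalar_prod_def atLeast0LessThan)
  finally show ?thesis .
qed

lemma mat_tr_one[simp]: "mat_tr (1\<^sub>m n) = of_nat n"
  unfolding mat_tr_def by simp

lemma mat_tr_smult: "A \<in> carrier_mat n n \<Longrightarrow> mat_tr (c \<cdot>\<^sub>m A) = c * mat_tr A"
  unfolding mat_tr_def by (auto simp: sum_distrib_left intro!: sum.cong)

lemma mat_vec_zero: "(A :: complex mat) \<in> carrier_mat n m \<Longrightarrow> A *\<^sub>v 0\<^sub>v m = 0\<^sub>v n"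
  by (intro eq_vecI) (auto simp: scalar_prod_def)

lemma zero_mat_vec[simp]: "(x :: complex vec) \<in> carrier_vec m \<Longrightarrow> 0\<^sub>m n m *\<^sub>v x = 0\<^sub>v n"
  by (intro eq_vecI) (auto simp: scalar_prod_def)

lemma smult_mat_vec:
  fixes A :: "complex mat"
  assumes "A \<in> carrier_mat n m" "v \<in> carrier_vec m"
  shows "(c \<cdot>\<^sub>m A) *\<^sub>v v = c \<cdot>\<^sub>v (A *\<^sub>v v)"
  using assms by (intro eq_vecI) (auto simp: scalar_prod_def sum_distrib_left mult.assoc)

lemma schur_scalar:
  assumes irr: "irreducible_rep G d \<sigma>" and A: "A \<in> carrier_mat d d"
    and comm: "\<And>g. g \<in> carrier G \<Longrightarrow> A * \<sigma> g = \<sigma> g * A"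
  shows "\<exists>c. A = c \<cdot>\<^sub>m 1\<^sub>m d"
proof -
  have d: "d > 0" and rep: "is_rep G d \<sigma>"
    and irrW: "\<And>W. invariant_subspace G d \<sigma> W \<Longrightarrow> W = {0\<^sub>v d} \<or> W = carrier_vec d"
    using irr unfolding irreducible_rep_def by auto
  have sc: "\<And>g. g \<in> carrier G \<Longrightarrow> \<sigma> g \<in> carrier_mat d d" using rep unfolding is_rep_def by auto
  obtain c where "c \<in> spectrum A" using spectrum_non_empty[OF A d] by auto
  then obtain v where v: "v \<in> carrier_vec d" "v \<noteq> 0\<^sub>v d" "A *\<^sub>v v = c \<cdot>\<^sub>v v"
    using A unfolding spectrum_def eigenvalue_def eigenvector_def by auto
  define E where "E = {w \<in> carrier_vec d. A *\<^sub>v w = c \<cdot>\<^sub>v w}"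
  have "invariant_subspace G d \<sigma> E"
    unfolding invariant_subspace_def
  proof (intro conjI ballI allI)
    show "E \<subseteq> carrier_vec d" unfolding E_def by auto
    show "0\<^sub>v d \<in> E" unfolding E_def using A by auto
    fix x y assume x: "x \<in> E" and y: "y \<in> E"
    have xc: "x \<in> carrier_vec d" and yc: "y \<in> carrier_vec d" using x y unfolding E_def by auto
    have "A *\<^sub>v (x + y) = A *\<^sub>v x + A *\<^sub>v y" using mult_add_distrib_mat_vec[OF A xc yc] .
    also have "\<dots> = c \<cdot>\<^sub>v (x + y)" using x y unfolding E_def using xc yc by (simp add: smult_add_distrib_vec)
    finally show "x + y \<in> E" unfolding E_def using xc yc by auto
  next
    fix a :: complex and x :: "complex vec" assume x: "x \<in> E"
    have xc: "x \<in> carrier_vec d" using x unfolding E_def by auto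
    have "A *\<^sub>v (a \<cdot>\<^sub>v x) = a \<cdot>\<^sub>v (A *\<^sub>v x)" using mult_mat_vec[OF A xc] .
    also have "\<dots> = c \<cdot>\<^sub>v (a \<cdot>\<^sub>v x)" using x unfolding E_def by (auto simp: smult_smult_assoc mult.commute)
    finally show "a \<cdot>\<^sub>v x \<in> E" unfolding E_def using xc by auto
  next
    fix g x assume g: "g \<in> carrier G" and x: "x \<in> E"
    have xc: "x \<in> carrier_vec d" using x unfolding E_def by auto
    have "A *\<^sub>v (\<sigma> g *\<^sub>v x) = (A * \<sigma> g) *\<^sub>v x" using assoc_mult_mat_vec[OF A sc[OF g] xc] by simp
    also have "\<dots> = \<sigma> g *\<^sub>v (A *\<^sub>v x)" using comm[OF g] assoc_mult_mat_vec[OF sc[OF g] A xc] by simp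
    also have "\<dots> = c \<cdot>\<^sub>v (\<sigma> g *\<^sub>v x)" using x mult_mat_vec[OF sc[OF g] xc] unfolding E_def by simp
    finally show "\<sigma> g *\<^sub>v x \<in> E" unfolding E_def using sc[OF g] xc by auto
  qed
  moreover have "E \<noteq> {0\<^sub>v d}" using v unfolding E_def by auto
  ultimately have EC: "E = carrier_vec d" using irrW by auto
  have "A = c \<cdot>\<^sub>m 1\<^sub>m d"
  proof (rule mat_eq_by_vec[OF A])
    show "c \<cdot>\<^sub>m 1\<^sub>m d \<in> carrier_mat d d" by simp
    fix x :: "complex vec" assume x: "x \<in> carrier_vec d"
    hence "A *\<^sub>v x = c \<cdot>\<^sub>v x" using EC unfolding E_def by auto
    thus "A *\<^sub>v x = (c \<cdot>\<^sub>m 1\<^sub>m d) *\<^sub>v x" using x by (simp add: smult_mat_vec[of _ d d])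
  qed
  thus ?thesis by auto
qed

lemma inj_left_inverse:
  fixes A :: "complex mat"
  assumes A: "A \<in> carrier_mat e d" and inj: "\<And>v. v \<in> carrier_vec d \<Longrightarrow> A *\<^sub>v v = 0\<^sub>v e \<Longrightarrow> v = 0\<^sub>v d"
  shows "\<exists>C. C \<in> carrier_mat d e \<and> C * A = 1\<^sub>m d"
proof -
  let ?M = "adj A * A"
  have M: "?M \<in> carrier_mat d d" using A by auto
  have "det ?M \<noteq> 0"
  proof
    assume "det ?M = 0"
    then obtain v where v: "v \<in> carrier_vec d" "v \<noteq> 0\<^sub>v d" "?M *\<^sub>v v = 0\<^sub>v d"
      using det_0_iff_vec_prod_zero_field[OF M] by auto
    have Av: "A *\<^sub>v v \<in> carrier_vec e" using A v by auto
    have "ip (A *\<^sub>v v) (A *\<^sub>v v) = ip v (adj A *\<^sub>v (A *\<^sub>v v))" using ip_mult[OF A v(1) Av] .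
    also have "adj A *\<^sub>v (A *\<^sub>v v) = ?M *\<^sub>v v" using assoc_mult_mat_vec[OF adj_carrier[OF A] A v(1)] by simp
    also have "ip v (?M *\<^sub>v v) = 0" unfolding v(3) using ip_zero_right[OF v(1)] .
    finally have "A *\<^sub>v v = 0\<^sub>v e" using ip_self_zero[OF Av] by simp
    thus False using inj v by auto
  qed
  from det_non_zero_imp_unit[OF M this, of "()"]
  obtain B where B: "B \<in> carrier_mat d d" "B * ?M = 1\<^sub>m d"
    unfolding Units_def ring_mat_def by auto
  have "(B * adj A) * A = 1\<^sub>m d" using B assoc_mult_mat[OF B(1) adj_carrier[OF A] A] by simp
  moreover have "B * adj A \<in> carrier_mat d e" using B A by auto
  ultimately show ?thesis by blast
qed

lemma surj_right_inverse:
  fixes A :: "complex mat"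
  assumes A: "A \<in> carrier_mat e d" and surj: "\<And>w. w \<in> carrier_vec e \<Longrightarrow> \<exists>v\<in>carrier_vec d. A *\<^sub>v v = w"
  shows "\<exists>B. B \<in> carrier_mat d e \<and> A * B = 1\<^sub>m e"
proof -
  define b where "b j = (SOME v. v \<in> carrier_vec d \<and> A *\<^sub>v v = unit_vec e j)" for j
  have b: "b j \<in> carrier_vec d \<and> A *\<^sub>v b j = unit_vec e j" if "j < e" for j
  proof -
    have "\<exists>v. v \<in> carrier_vec d \<and> A *\<^sub>v v = unit_vec e j" using surj[of "unit_vec e j"] that by auto
    thus ?thesis unfolding b_def by (rule someI_ex)
  qed
  define B where "B = mat_of_cols d (map b [0..<e])"
  have B: "B \<in> carrier_mat d e" unfolding B_def by auto
  have "A * B = 1\<^sub>m e"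
  proof (rule mat_col_eqI)
    fix j assume j: "j < dim_col (1\<^sub>m e)"
    hence j': "j < e" by simp
    have "col (A * B) j = A *\<^sub>v col B j" using col_mult2[OF A B j'] .
    also have "col B j = b j" unfolding B_def using col_mat_of_cols[of j "map b [0..<e]" d] b[OF j'] j' by simp
    also have "A *\<^sub>v b j = unit_vec e j" using b[OF j'] by simp
    finally show "col (A * B) j = col (1\<^sub>m e) j" using j' by simp
  qed (use A B in auto)
  thus ?thesis using B by blast
qed

lemma schur_inter:
  assumes irs: "irreducible_rep G d \<sigma>" and irt: "irreducible_rep G e \<tau>"
    and A: "A \<in> carrier_mat e d"
    and comm: "\<And>g. g \<in> carrier G \<Longrightarrow> \<tau> g * A = A * \<sigma> g"
    and A0: "A \<noteq> 0\<^sub>m e d"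
  shows "d = e \<and> (\<exists>B. B \<in> carrier_mat d d \<and> A * B = 1\<^sub>m d \<and> B * A = 1\<^sub>m d)"
proof -
  have reps: "is_rep G d \<sigma>" and irrs: "\<And>W. invariant_subspace G d \<sigma> W \<Longrightarrow> W = {0\<^sub>v d} \<or> W = carrier_vec d"
    using irs unfolding irreducible_rep_def by auto
  have rept: "is_rep G e \<tau>" and irrt: "\<And>W. invariant_subspace G e \<tau> W \<Longrightarrow> W = {0\<^sub>v e} \<or> W = carrier_vec e"
    using irt unfolding irreducible_rep_def by auto
  have sc: "\<And>g. g \<in> carrier G \<Longrightarrow> \<sigma> g \<in> carrier_mat d d" using reps unfolding is_rep_def by auto
  have tc: "\<And>g. g \<in> carrier G \<Longrightarrow> \<tau> g \<in> carrier_mat e e" using rept unfolding is_rep_def by auto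
  define K where "K = {v \<in> carrier_vec d. A *\<^sub>v v = 0\<^sub>v e}"
  have "invariant_subspace G d \<sigma> K"
    unfolding invariant_subspace_def
  proof (intro conjI ballI allI)
    show "K \<subseteq> carrier_vec d" unfolding K_def by auto
    show "0\<^sub>v d \<in> K" unfolding K_def using A by auto
    fix x y assume x: "x \<in> K" and y: "y \<in> K"
    thus "x + y \<in> K" unfolding K_def using mult_add_distrib_mat_vec[OF A] by auto
  next
    fix a :: complex and x :: "complex vec" assume x: "x \<in> K"
    thus "a \<cdot>\<^sub>v x \<in> K" unfolding K_def using mult_mat_vec[OF A] by auto
  next
    fix g x assume g: "g \<in> carrier G" and x: "x \<in> K"
    have xc: "x \<in> carrier_vec d" using x unfolding K_def by auto
    have "A *\<^sub>v (\<sigma> g *\<^sub>v x) = (A * \<sigma> g) *\<^sub>v x" using assoc_mult_mat_vec[OF A sc[OF g] xc] by simp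
    also have "\<dots> = \<tau> g *\<^sub>v (A *\<^sub>v x)" using comm[OF g] assoc_mult_mat_vec[OF tc[OF g] A xc] by simp
    also have "\<dots> = 0\<^sub>v e" using x mat_vec_zero[OF tc[OF g]] unfolding K_def by simp
    finally show "\<sigma> g *\<^sub>v x \<in> K" unfolding K_def using sc[OF g] xc by auto
  qed
  hence "K = {0\<^sub>v d} \<or> K = carrier_vec d" using irrs by auto
  moreover have "K \<noteq> carrier_vec d"
  proof
    assume "K = carrier_vec d"
    hence "A = 0\<^sub>m e d" using A unfolding K_def by (intro mat_eq_by_vec[OF A]) auto
    thus False using A0 by simp
  qed
  ultimately have K0: "K = {0\<^sub>v d}" by simp
  define I where "I = {w. \<exists>v\<in>carrier_vec d. w = A *\<^sub>v v}"
  have "invariant_subspace G e \<tau> I"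
    unfolding invariant_subspace_def
  proof (intro conjI ballI allI)
    show "I \<subseteq> carrier_vec e" unfolding I_def using A by auto
    show "0\<^sub>v e \<in> I" unfolding I_def using A by (intro CollectI bexI[of _ "0\<^sub>v d"]) auto
    fix x y assume x: "x \<in> I" and y: "y \<in> I"
    then obtain a b where "a \<in> carrier_vec d" "b \<in> carrier_vec d" "x = A *\<^sub>v a" "y = A *\<^sub>v b" unfolding I_def by auto
    thus "x + y \<in> I" unfolding I_def using mult_add_distrib_mat_vec[OF A] by (intro CollectI bexI[of _ "a + b"]) auto
  next
    fix c :: complex and x :: "complex vec" assume x: "x \<in> I"
    then obtain a where "a \<in> carrier_vec d" "x = A *\<^sub>v a" unfolding I_def by auto
    thus "c \<cdot>\<^sub>v x \<in> I" unfolding I_def using mult_mat_vec[OF A] by (intro CollectI bexI[of _ "c \<cdot>\<^sub>v a"]) auto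
  next
    fix g x assume g: "g \<in> carrier G" and x: "x \<in> I"
    then obtain a where a: "a \<in> carrier_vec d" "x = A *\<^sub>v a" unfolding I_def by auto
    have "\<tau> g *\<^sub>v x = (\<tau> g * A) *\<^sub>v a" using assoc_mult_mat_vec[OF tc[OF g] A a(1)] a by simp
    also have "\<dots> = A *\<^sub>v (\<sigma> g *\<^sub>v a)" using comm[OF g] assoc_mult_mat_vec[OF A sc[OF g] a(1)] by simp
    finally show "\<tau> g *\<^sub>v x \<in> I" unfolding I_def using sc[OF g] a by auto
  qed
  hence "I = {0\<^sub>v e} \<or> I = carrier_vec e" using irrt by auto
  moreover have "I \<noteq> {0\<^sub>v e}"
  proof
    assume "I = {0\<^sub>v e}"
    hence "A = 0\<^sub>m e d" using A unfolding I_def by (intro mat_eq_by_vec[OF A]) auto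
    thus False using A0 by simp
  qed
  ultimately have IC: "I = carrier_vec e" by simp
  obtain C where C: "C \<in> carrier_mat d e" "C * A = 1\<^sub>m d"
    using inj_left_inverse[OF A] K0 unfolding K_def by blast
  have "\<exists>v\<in>carrier_vec d. A *\<^sub>v v = w" if "w \<in> carrier_vec e" for w
  proof -
    have "w \<in> I" using IC that by simp
    thus ?thesis unfolding I_def by auto
  qed
  then obtain B where B: "B \<in> carrier_mat d e" "A * B = 1\<^sub>m e"
    using surj_right_inverse[OF A] by blast
  have de: "d = e" using left_inv_le[OF C(1) A C(2)] left_inv_le[OF A B(1) B(2)] by simp
  have "B * A = 1\<^sub>m d" using mat_mult_left_right_inverse[of A e B] A B de by simp
  thus ?thesis using B de by auto
qed

lemma assoc4:
  assumes "A \<in> carrier_mat d d" "B \<in> carrier_mat d d" "C \<in> carrier_mat d d" "D \<in> carrier_mat d d"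
  shows "A * (B * C) * D = (A * B) * (C * D)"
proof -
  have "A * (B * C) = A * B * C" using assms by (simp add: assoc_mult_mat)
  hence "A * (B * C) * D = A * B * C * D" by simp
  also have "\<dots> = (A * B) * (C * D)" using assms by (intro assoc_mult_mat) auto
  finally show ?thesis .
qed

lemma mat_tr_adj: "A \<in> carrier_mat n n \<Longrightarrow> mat_tr (adj A) = cnj (mat_tr A)"
  unfolding mat_tr_def by auto

lemma msum_mult_vec:
  assumes "\<And>g. g \<in> S \<Longrightarrow> F g \<in> carrier_mat r c" "v \<in> carrier_vec c" "i < r"
  shows "(msum r c F S *\<^sub>v v) $ i = (\<Sum>g\<in>S. (F g *\<^sub>v v) $ i)"
  using assms(2,3) by (auto simp: scalar_prod_def sum_distrib_right sum.swap[of _ S] dest!: assms(1) intro!: sum.cong)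

lemma msum_ip:
  assumes F: "\<And>g. g \<in> S \<Longrightarrow> F g \<in> carrier_mat d d" and v: "v \<in> carrier_vec d"
  shows "ip (msum d d F S *\<^sub>v v) v = (\<Sum>g\<in>S. ip (F g *\<^sub>v v) v)"
proof -
  have "ip (msum d d F S *\<^sub>v v) v = (\<Sum>i<d. (\<Sum>g\<in>S. (F g *\<^sub>v v) $ i) * cnj (v$i))"
  proof -
    have e: "(msum d d F S *\<^sub>v v) $ i = (\<Sum>g\<in>S. (F g *\<^sub>v v) $ i)" if "i < d" for i
      by (rule msum_mult_vec[OF F v that])
    show ?thesis unfolding ip_def using e by (intro sum.cong) (simp_all del: index_mult_mat_vec)
  qed
  also have "\<dots> = (\<Sum>g\<in>S. \<Sum>i<d. (F g *\<^sub>v v) $ i * cnj (v$i))"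
    by (simp add: sum_distrib_right sum.swap[of _ S])
  also have "\<dots> = (\<Sum>g\<in>S. ip (F g *\<^sub>v v) v)"
    unfolding ip_def using F by (auto intro!: sum.cong)
  finally show ?thesis .
qed

locale grp = group G for G :: "'a monoid" (structure)

context grp begin

lemma rep_carrier: "is_rep G d \<rho> \<Longrightarrow> g \<in> carrier G \<Longrightarrow> \<rho> g \<in> carrier_mat d d"
  unfolding is_rep_def by auto

lemma rep_one: "is_rep G d \<rho> \<Longrightarrow> \<rho> \<one> = 1\<^sub>m d"
  unfolding is_rep_def by auto

lemma rep_mult: "is_rep G d \<rho> \<Longrightarrow> g \<in> carrier G \<Longrightarrow> h \<in> carrier G \<Longrightarrow> \<rho> (g \<otimes> h) = \<rho> g * \<rho> h"
  unfolding is_rep_def by auto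

lemma rep_inv_r: "is_rep G d \<rho> \<Longrightarrow> g \<in> carrier G \<Longrightarrow> \<rho> g * \<rho> (inv g) = 1\<^sub>m d"
  using rep_mult[of d \<rho> g "inv g"] rep_one[of d \<rho>] by simp

lemma rep_inv_l: "is_rep G d \<rho> \<Longrightarrow> g \<in> carrier G \<Longrightarrow> \<rho> (inv g) * \<rho> g = 1\<^sub>m d"
  using rep_mult[of d \<rho> "inv g" g] rep_one[of d \<rho>] by simp

lemma inv_cancel1: "x \<in> carrier G \<Longrightarrow> a \<in> carrier G \<Longrightarrow> inv x \<otimes> (x \<otimes> a) = a"
  by (simp add: m_assoc[symmetric])

lemma inv_cancel2: "x \<in> carrier G \<Longrightarrow> a \<in> carrier G \<Longrightarrow> x \<otimes> (inv x \<otimes> a) = a"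
  by (simp add: m_assoc[symmetric])

lemma bij_rmult: "h \<in> carrier G \<Longrightarrow> bij_betw (\<lambda>g. g \<otimes> h) (carrier G) (carrier G)"
  by (rule bij_betw_byWitness[where f' = "\<lambda>g. g \<otimes> inv h"]) (auto simp: m_assoc)

lemma bij_lmult: "h \<in> carrier G \<Longrightarrow> bij_betw (\<lambda>g. h \<otimes> g) (carrier G) (carrier G)"
  by (rule bij_betw_byWitness[where f' = "\<lambda>g. inv h \<otimes> g"]) (auto simp: inv_cancel1 inv_cancel2)

lemma bij_inv: "bij_betw (\<lambda>g. inv g) (carrier G) (carrier G)"
  by (rule bij_betw_byWitness[where f' = "\<lambda>g. inv g"]) auto

lemma bij_conjg: assumes x: "x \<in> carrier G" shows "bij_betw (\<lambda>g. x \<otimes> g \<otimes> inv x) (carrier G) (carrier G)"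
proof -
  have "bij_betw ((\<lambda>g. g \<otimes> inv x) \<circ> (\<lambda>g. x \<otimes> g)) (carrier G) (carrier G)"
    using bij_betw_trans[OF bij_lmult[OF x] bij_rmult[of "inv x"]] x by simp
  thus ?thesis by (simp add: o_def)
qed

lemma char_conj_inv:
  assumes fin: "finite (carrier G)" and rep: "is_rep G d \<rho>" and h: "h \<in> carrier G"
  shows "mat_tr (\<rho> (inv h)) = cnj (mat_tr (\<rho> h))"
proof -
  have rc: "\<And>g. g \<in> carrier G \<Longrightarrow> \<rho> g \<in> carrier_mat d d" using rep_carrier[OF rep] .
  have ac: "\<And>g. g \<in> carrier G \<Longrightarrow> adj (\<rho> g) * \<rho> g \<in> carrier_mat d d" using rc by (metis adj_carrier mult_carrier_mat)
  define P where "P = msum d d (\<lambda>g. adj (\<rho> g) * \<rho> g) (carrier G)"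
  have P: "P \<in> carrier_mat d d" unfolding P_def by simp
  have Pinv: "adj (\<rho> h) * P * \<rho> h = P"
  proof -
    have "adj (\<rho> h) * P = msum d d (\<lambda>g. adj (\<rho> h) * (adj (\<rho> g) * \<rho> g)) (carrier G)"
      unfolding P_def using rc h ac by (intro msum_mult_left) auto
    also have "\<dots> * \<rho> h = msum d d (\<lambda>g. adj (\<rho> h) * (adj (\<rho> g) * \<rho> g) * \<rho> h) (carrier G)"
      using rc h ac by (intro msum_mult_right) (auto intro!: mult_carrier_mat[of _ d d _ d] adj_carrier)
    also have "\<dots> = msum d d (\<lambda>g. (\<lambda>g. adj (\<rho> g) * \<rho> g) (g \<otimes> h)) (carrier G)"
    proof (rule msum_cong)
      fix g assume g: "g \<in> carrier G"
      have "adj (\<rho> h) * (adj (\<rho> g) * \<rho> g) * \<rho> h = (adj (\<rho> h) * adj (\<rho> g)) * (\<rho> g * \<rho> h)"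
        using rc[OF g] rc[OF h] by (intro assoc4) auto
      also have "\<dots> = adj (\<rho> (g \<otimes> h)) * \<rho> (g \<otimes> h)"
        using rep_mult[OF rep g h] adj_mult[OF rc[OF g] rc[OF h]] by simp
      finally show "adj (\<rho> h) * (adj (\<rho> g) * \<rho> g) * \<rho> h = (\<lambda>g. adj (\<rho> g) * \<rho> g) (g \<otimes> h)" by simp
    qed
    also have "\<dots> = P" unfolding P_def by (rule msum_reindex[OF bij_rmult[OF h]])
    finally show ?thesis .
  qed
  have "det P \<noteq> 0"
  proof
    assume "det P = 0"
    then obtain v where v: "v \<in> carrier_vec d" "v \<noteq> 0\<^sub>v d" "P *\<^sub>v v = 0\<^sub>v d"
      using det_0_iff_vec_prod_zero_field[OF P] by auto
    have "ip (P *\<^sub>v v) v = (\<Sum>g\<in>carrier G. ip ((adj (\<rho> g) * \<rho> g) *\<^sub>v v) v)"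
      unfolding P_def using ac v(1) by (intro msum_ip) auto
    also have "\<dots> = (\<Sum>g\<in>carrier G. ip (\<rho> g *\<^sub>v v) (\<rho> g *\<^sub>v v))"
    proof (rule sum.cong[OF refl])
      fix g assume g: "g \<in> carrier G"
      have "(adj (\<rho> g) * \<rho> g) *\<^sub>v v = adj (\<rho> g) *\<^sub>v (\<rho> g *\<^sub>v v)"
        using assoc_mult_mat_vec[OF adj_carrier[OF rc[OF g]] rc[OF g] v(1)] .
      moreover have "ip (adj (\<rho> g) *\<^sub>v (\<rho> g *\<^sub>v v)) v = ip (\<rho> g *\<^sub>v v) (\<rho> g *\<^sub>v v)"
        using ip_mult[OF adj_carrier[OF rc[OF g]] _ v(1), of "\<rho> g *\<^sub>v v"] rc[OF g] v(1) by auto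
      ultimately show "ip ((adj (\<rho> g) * \<rho> g) *\<^sub>v v) v = ip (\<rho> g *\<^sub>v v) (\<rho> g *\<^sub>v v)" by simp
    qed
    finally have eq: "ip (P *\<^sub>v v) v = (\<Sum>g\<in>carrier G. ip (\<rho> g *\<^sub>v v) (\<rho> g *\<^sub>v v))" .
    have "Re (ip (P *\<^sub>v v) v) = (\<Sum>g\<in>carrier G. Re (ip (\<rho> g *\<^sub>v v) (\<rho> g *\<^sub>v v)))"
      unfolding eq by (simp add: Re_sum)
    also have "\<dots> \<ge> Re (ip (\<rho> \<one> *\<^sub>v v) (\<rho> \<one> *\<^sub>v v))"
      using fin by (intro member_le_sum) (auto intro: ip_self_ge)
    finally have "Re (ip (P *\<^sub>v v) v) \<ge> Re (ip v v)" using rep_one[OF rep] v(1) by simp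
    moreover have "Re (ip v v) \<noteq> 0"
    proof
      assume "Re (ip v v) = 0"
      hence "ip v v = 0" using ip_self_ge(2)[of v] by (simp add: complex_eq_iff)
      thus False using ip_self_zero[OF v(1)] v(2) by simp
    qed
    ultimately have "Re (ip (P *\<^sub>v v) v) \<noteq> 0" using ip_self_ge(1)[of v] by linarith
    thus False unfolding v(3) by (simp add: ip_zero_left)
  qed
  from det_non_zero_imp_unit[OF P this, of "()"]
  obtain Q where Q: "Q \<in> carrier_mat d d" "Q * P = 1\<^sub>m d" "P * Q = 1\<^sub>m d"
    unfolding Units_def ring_mat_def by auto
  have hi: "inv h \<in> carrier G" using h by simp
  have "adj (\<rho> h) * P = adj (\<rho> h) * P * (\<rho> h * \<rho> (inv h))"
    using rep_inv_r[OF rep h] P rc[OF h] by simp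
  also have "\<dots> = (adj (\<rho> h) * P * \<rho> h) * \<rho> (inv h)"
    using P rc[OF h] rc[OF hi] by (simp add: assoc_mult_mat[of _ d d _ d _ d])
  also have "\<dots> = P * \<rho> (inv h)" using Pinv by simp
  finally have e1: "adj (\<rho> h) * P = P * \<rho> (inv h)" .
  have "adj (\<rho> h) = adj (\<rho> h) * P * Q" using Q rc[OF h] P by (simp add: assoc_mult_mat[of _ d d _ d _ d])
  also have "\<dots> = P * \<rho> (inv h) * Q" using e1 by simp
  finally have e2: "adj (\<rho> h) = P * \<rho> (inv h) * Q" .
  have "cnj (mat_tr (\<rho> h)) = mat_tr (P * \<rho> (inv h) * Q)" using e2 mat_tr_adj[OF rc[OF h]] by simp
  also have "\<dots> = mat_tr (Q * (P * \<rho> (inv h)))" using Q P rc[OF hi] by (intro mat_tr_comm) auto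
  also have "Q * (P * \<rho> (inv h)) = \<rho> (inv h)" using Q P rc[OF hi] by (simp add: assoc_mult_mat[symmetric, of _ d d _ d _ d])
  finally show ?thesis by simp
qed

lemma char_conjg:
  assumes rep: "is_rep G d \<rho>" and g: "g \<in> carrier G" and x: "x \<in> carrier G"
  shows "mat_tr (\<rho> (x \<otimes> g \<otimes> inv x)) = mat_tr (\<rho> g)"
proof -
  have rc: "\<And>g. g \<in> carrier G \<Longrightarrow> \<rho> g \<in> carrier_mat d d" using rep_carrier[OF rep] .
  have xi: "inv x \<in> carrier G" using x by simp
  have "\<rho> (x \<otimes> g \<otimes> inv x) = \<rho> x * (\<rho> g * \<rho> (inv x))"
    using rep_mult[OF rep] g x xi rc by (simp add: assoc_mult_mat[of _ d d _ d _ d])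
  hence "mat_tr (\<rho> (x \<otimes> g \<otimes> inv x)) = mat_tr ((\<rho> g * \<rho> (inv x)) * \<rho> x)"
    using mat_tr_comm[OF rc[OF x] mult_carrier_mat[OF rc[OF g] rc[OF xi]]] by simp
  also have "(\<rho> g * \<rho> (inv x)) * \<rho> x = \<rho> g"
    using rep_inv_l[OF rep x] rc[OF g] rc[OF x] rc[OF xi] by (simp add: assoc_mult_mat[of _ d d _ d _ d] mult_carrier_mat)
  finally show ?thesis .
qed

end

definition Emat :: "nat \<Rightarrow> nat \<Rightarrow> nat \<Rightarrow> nat \<Rightarrow> complex mat" where
  "Emat e d j k = mat e d (\<lambda>(a,b). if a = j \<and> b = k then 1 else 0)"

lemma Emat_carrier[simp]: "Emat e d j k \<in> carrier_mat e d"
  unfolding Emat_def by simp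

lemma mult_index_sum:
  fixes A B :: "complex mat"
  assumes "A \<in> carrier_mat n k" "B \<in> carrier_mat k m" "i < n" "j < m"
  shows "(A * B) $$ (i,j) = (\<Sum>l<k. A$$(i,l) * B$$(l,j))"
  using assms by (simp add: scalar_prod_def atLeast0LessThan)

lemma assoc3l:
  fixes A B C D :: "complex mat"
  assumes A: "A \<in> carrier_mat n a" and B: "B \<in> carrier_mat a b" and C: "C \<in> carrier_mat b c" and D: "D \<in> carrier_mat c m"
  shows "A * (B * C * D) = A * B * C * D"
proof -
  have "A * (B * C * D) = A * (B * C) * D" using assoc_mult_mat[symmetric, OF A mult_carrier_mat[OF B C] D] .
  also have "A * (B * C) = A * B * C" using assoc_mult_mat[symmetric, OF A B C] .
  finally show ?thesis .
qed

lemma Emat_mult_index: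
  assumes X: "X \<in> carrier_mat n e" and Y: "Y \<in> carrier_mat d m"
    and jk: "j < e" "k < d" and il: "i < n" "l < m"
  shows "(X * Emat e d j k * Y) $$ (i,l) = X$$(i,j) * Y$$(k,l)"
proof -
  have XE: "(X * Emat e d j k) $$ (i,b) = (if b = k then X$$(i,j) else 0)" if b: "b < d" for b
  proof -
    have "(X * Emat e d j k) $$ (i,b) = (\<Sum>a<e. X$$(i,a) * (if a = j \<and> b = k then 1 else 0))"
      using X il b unfolding Emat_def by (auto simp: scalar_prod_def atLeast0LessThan intro!: sum.cong)
    also have "\<dots> = (\<Sum>a<e. if a = j then (if b = k then X$$(i,j) else 0) else 0)"
      by (intro sum.cong) auto
    also have "\<dots> = (if b = k then X$$(i,j) else 0)" using jk by (simp add: sum.delta)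
    finally show ?thesis .
  qed
  have "(X * Emat e d j k * Y) $$ (i,l) = (\<Sum>b<d. (X * Emat e d j k) $$ (i,b) * Y$$(b,l))"
    using X Y il by (intro mult_index_sum) auto
  also have "\<dots> = (\<Sum>b<d. if b = k then X$$(i,j) * Y$$(k,l) else 0)"
    using XE by (intro sum.cong) auto
  also have "\<dots> = X$$(i,j) * Y$$(k,l)" using jk by (simp add: sum.delta)
  finally show ?thesis .
qed

context grp begin

definition avg :: "nat \<Rightarrow> nat \<Rightarrow> ('a \<Rightarrow> complex mat) \<Rightarrow> ('a \<Rightarrow> complex mat) \<Rightarrow> complex mat \<Rightarrow> complex mat" where
  "avg e d \<tau> \<sigma> X = msum e d (\<lambda>g. \<tau> g * X * \<sigma> (inv g)) (carrier G)"

lemma avg_comm: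
  assumes rs: "is_rep G d \<sigma>" and rt: "is_rep G e \<tau>" and X: "X \<in> carrier_mat e d" and h: "h \<in> carrier G"
  shows "\<tau> h * avg e d \<tau> \<sigma> X = avg e d \<tau> \<sigma> X * \<sigma> h"
proof -
  have sc: "\<And>g. g \<in> carrier G \<Longrightarrow> \<sigma> g \<in> carrier_mat d d" using rep_carrier[OF rs] .
  have tc: "\<And>g. g \<in> carrier G \<Longrightarrow> \<tau> g \<in> carrier_mat e e" using rep_carrier[OF rt] .
  have Fc: "\<And>g. g \<in> carrier G \<Longrightarrow> \<tau> g * X * \<sigma> (inv g) \<in> carrier_mat e d"
    using sc tc X by (meson inv_closed mult_carrier_mat)
  define F where "F g = \<tau> g * X * \<sigma> (inv g \<otimes> h)" for g
  have "\<tau> h * avg e d \<tau> \<sigma> X = msum e d (\<lambda>g. \<tau> h * (\<tau> g * X * \<sigma> (inv g))) (carrier G)"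
    unfolding avg_def using tc[OF h] Fc by (intro msum_mult_left) auto
  also have "\<dots> = msum e d (\<lambda>g. F (h \<otimes> g)) (carrier G)"
  proof (rule msum_cong)
    fix g assume g: "g \<in> carrier G"
    have ig: "inv g \<in> carrier G" using g by simp
    have e1: "\<tau> h * (\<tau> g * X * \<sigma> (inv g)) = (\<tau> h * \<tau> g) * X * \<sigma> (inv g)"
      using tc[OF h] tc[OF g] X sc[OF ig] by (rule assoc3l)
    have e2: "inv (h \<otimes> g) \<otimes> h = inv g" using g h by (simp add: inv_mult_group m_assoc)
    show "\<tau> h * (\<tau> g * X * \<sigma> (inv g)) = F (h \<otimes> g)" unfolding F_def e2 using e1 rep_mult[OF rt h g] by simp
  qed
  also have "\<dots> = msum e d F (carrier G)" by (rule msum_reindex[OF bij_lmult[OF h]])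
  also have "\<dots> = msum e d (\<lambda>g. \<tau> g * X * \<sigma> (inv g) * \<sigma> h) (carrier G)"
  proof (rule msum_cong)
    fix g assume g: "g \<in> carrier G"
    have ig: "inv g \<in> carrier G" using g by simp
    have "\<sigma> (inv g \<otimes> h) = \<sigma> (inv g) * \<sigma> h" using rep_mult[OF rs ig h] .
    thus "F g = \<tau> g * X * \<sigma> (inv g) * \<sigma> h" unfolding F_def
      using assoc_mult_mat[symmetric, OF mult_carrier_mat[OF tc[OF g] X] sc[OF ig] sc[OF h]] by simp
  qed
  also have "\<dots> = avg e d \<tau> \<sigma> X * \<sigma> h"
    unfolding avg_def using sc[OF h] Fc by (intro msum_mult_right[symmetric]) auto
  finally show ?thesis .
qed

lemma avg_index:
  assumes rs: "is_rep G d \<sigma>" and rt: "is_rep G e \<tau>" and jk: "j < e" "k < d" and il: "i < e" "l < d"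
  shows "avg e d \<tau> \<sigma> (Emat e d j k) $$ (i,l) = (\<Sum>g\<in>carrier G. \<tau> g $$ (i,j) * \<sigma> (inv g) $$ (k,l))"
  unfolding avg_def using il
  by (auto intro!: sum.cong Emat_mult_index[OF rep_carrier[OF rt] rep_carrier[OF rs] jk] simp: il)

lemma char_sum_avg:
  assumes rs: "is_rep G d \<sigma>" and rt: "is_rep G e \<tau>"
  shows "(\<Sum>g\<in>carrier G. mat_tr (\<tau> g) * mat_tr (\<sigma> (inv g))) =
     (\<Sum>i<e. \<Sum>k<d. avg e d \<tau> \<sigma> (Emat e d i k) $$ (i,k))"
proof -
  have "(\<Sum>g\<in>carrier G. mat_tr (\<tau> g) * mat_tr (\<sigma> (inv g))) =
     (\<Sum>g\<in>carrier G. \<Sum>i<e. \<Sum>k<d. \<tau> g $$ (i,i) * \<sigma> (inv g) $$ (k,k))"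
  proof (rule sum.cong[OF refl])
    fix g assume g: "g \<in> carrier G"
    have dd: "dim_row (\<tau> g) = e" "dim_row (\<sigma> (inv g)) = d" using rep_carrier[OF rs] rep_carrier[OF rt] g by auto
    show "mat_tr (\<tau> g) * mat_tr (\<sigma> (inv g)) = (\<Sum>i<e. \<Sum>k<d. \<tau> g $$ (i,i) * \<sigma> (inv g) $$ (k,k))"
      unfolding mat_tr_def dd by (rule sum_product)
  qed
  also have "\<dots> = (\<Sum>i<e. \<Sum>g\<in>carrier G. \<Sum>k<d. \<tau> g $$ (i,i) * \<sigma> (inv g) $$ (k,k))"
    by (rule sum.swap)
  also have "\<dots> = (\<Sum>i<e. \<Sum>k<d. \<Sum>g\<in>carrier G. \<tau> g $$ (i,i) * \<sigma> (inv g) $$ (k,k))"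
    by (rule sum.cong[OF refl], rule sum.swap)
  also have "\<dots> = (\<Sum>i<e. \<Sum>k<d. avg e d \<tau> \<sigma> (Emat e d i k) $$ (i,k))"
    using avg_index[OF rs rt] by (intro sum.cong) auto
  finally show ?thesis .
qed

lemma orth_same:
  assumes fin: "finite (carrier G)" and irr: "irreducible_rep G d \<sigma>"
  shows "(\<Sum>g\<in>carrier G. mat_tr (\<sigma> g) * mat_tr (\<sigma> (inv g))) = of_nat (card (carrier G))"
proof -
  have rs: "is_rep G d \<sigma>" and d: "d > 0" using irr unfolding irreducible_rep_def by auto
  have sc: "\<And>g. g \<in> carrier G \<Longrightarrow> \<sigma> g \<in> carrier_mat d d" using rep_carrier[OF rs] .
  let ?n = "card (carrier G)"
  have entry: "avg d d \<sigma> \<sigma> (Emat d d j k) $$ (j,k) = (if j = k then of_nat ?n / of_nat d else 0)"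
    if jk: "j < d" "k < d" for j k
  proof -
    let ?A = "avg d d \<sigma> \<sigma> (Emat d d j k)"
    have A: "?A \<in> carrier_mat d d" unfolding avg_def by simp
    obtain c where c: "?A = c \<cdot>\<^sub>m 1\<^sub>m d"
      using schur_scalar[OF irr A] avg_comm[OF rs rs Emat_carrier] by metis
    have "mat_tr ?A = (\<Sum>i<d. \<Sum>g\<in>carrier G. \<sigma> g $$ (i,j) * \<sigma> (inv g) $$ (k,i))"
      unfolding mat_tr_def using avg_index[OF rs rs jk] A by (intro sum.cong) auto
    also have "\<dots> = (\<Sum>g\<in>carrier G. \<Sum>i<d. \<sigma> g $$ (i,j) * \<sigma> (inv g) $$ (k,i))"
      by (rule sum.swap)
    also have "\<dots> = (\<Sum>g\<in>carrier G. (\<sigma> (inv g) * \<sigma> g) $$ (k,j))"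
    proof (rule sum.cong[OF refl])
      fix g assume g: "g \<in> carrier G"
      show "(\<Sum>i<d. \<sigma> g $$ (i,j) * \<sigma> (inv g) $$ (k,i)) = (\<sigma> (inv g) * \<sigma> g) $$ (k,j)"
        using mult_index_sum[OF sc[OF inv_closed[OF g]] sc[OF g] jk(2) jk(1)] by (simp add: mult.commute)
    qed
    also have "\<dots> = (\<Sum>g\<in>carrier G. (if k = j then 1 else 0))"
      using rep_inv_l[OF rs] jk by (intro sum.cong) auto
    also have "\<dots> = (if j = k then of_nat ?n else 0)" by auto
    finally have tr: "mat_tr ?A = (if j = k then of_nat ?n else 0)" .
    have "mat_tr ?A = c * of_nat d" unfolding c by (simp add: mat_tr_smult[of _ d])
    hence cd: "c = (if j = k then of_nat ?n / of_nat d else 0)" using tr d by (auto simp: field_simps split: if_splits)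
    have "?A $$ (j,k) = (if j = k then c else 0)" unfolding c using jk by auto
    thus ?thesis using cd by auto
  qed
  have "(\<Sum>g\<in>carrier G. mat_tr (\<sigma> g) * mat_tr (\<sigma> (inv g))) = (\<Sum>i<d. \<Sum>k<d. avg d d \<sigma> \<sigma> (Emat d d i k) $$ (i,k))"
    by (rule char_sum_avg[OF rs rs])
  also have "\<dots> = (\<Sum>i<d. of_nat ?n / of_nat d)"
    using entry by (simp add: sum.delta)
  also have "\<dots> = of_nat ?n" using d by simp
  finally show ?thesis .
qed

lemma orth_diff:
  assumes fin: "finite (carrier G)" and irs: "irreducible_rep G d \<sigma>" and irt: "irreducible_rep G e \<tau>"
    and ne: "\<exists>g\<in>carrier G. mat_tr (\<tau> g) \<noteq> mat_tr (\<sigma> g)"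
  shows "(\<Sum>g\<in>carrier G. mat_tr (\<tau> g) * mat_tr (\<sigma> (inv g))) = 0"
proof -
  have rs: "is_rep G d \<sigma>" using irs unfolding irreducible_rep_def by auto
  have rt: "is_rep G e \<tau>" using irt unfolding irreducible_rep_def by auto
  have sc: "\<And>g. g \<in> carrier G \<Longrightarrow> \<sigma> g \<in> carrier_mat d d" using rep_carrier[OF rs] .
  have tc: "\<And>g. g \<in> carrier G \<Longrightarrow> \<tau> g \<in> carrier_mat e e" using rep_carrier[OF rt] .
  have z: "avg e d \<tau> \<sigma> X = 0\<^sub>m e d" if X: "X \<in> carrier_mat e d" for X
  proof (rule ccontr)
    let ?A = "avg e d \<tau> \<sigma> X"
    have A: "?A \<in> carrier_mat e d" unfolding avg_def by simp
    assume "?A \<noteq> 0\<^sub>m e d"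
    from schur_inter[OF irs irt A avg_comm[OF rs rt X] this]
    obtain B where de: "d = e" and B: "B \<in> carrier_mat d d" "?A * B = 1\<^sub>m d" "B * ?A = 1\<^sub>m d" by auto
    have "mat_tr (\<tau> g) = mat_tr (\<sigma> g)" if g: "g \<in> carrier G" for g
    proof -
      have "\<tau> g = \<tau> g * ?A * B" using B tc[OF g] A de by (simp add: assoc_mult_mat[of _ d d _ d _ d])
      also have "\<dots> = ?A * \<sigma> g * B" using avg_comm[OF rs rt X g] by simp
      finally have "mat_tr (\<tau> g) = mat_tr (?A * (\<sigma> g * B))"
        using A sc[OF g] B de by (simp add: assoc_mult_mat[of _ d d _ d _ d])
      also have "\<dots> = mat_tr ((\<sigma> g * B) * ?A)" using A sc[OF g] B de by (intro mat_tr_comm) auto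
      also have "(\<sigma> g * B) * ?A = \<sigma> g" using A sc[OF g] B de by (simp add: assoc_mult_mat[of _ d d _ d _ d])
      finally show ?thesis .
    qed
    thus False using ne by auto
  qed
  have "(\<Sum>g\<in>carrier G. mat_tr (\<tau> g) * mat_tr (\<sigma> (inv g))) = (\<Sum>i<e. \<Sum>k<d. avg e d \<tau> \<sigma> (Emat e d i k) $$ (i,k))"
    by (rule char_sum_avg[OF rs rt])
  also have "\<dots> = 0" using z by simp
  finally show ?thesis .
qed

end

lemma mat_tr_msum:
  assumes "\<And>g. g \<in> S \<Longrightarrow> F g \<in> carrier_mat d d"
  shows "mat_tr (msum d d F S) = (\<Sum>g\<in>S. mat_tr (F g))"
  unfolding mat_tr_def using assms by (auto simp: sum.swap[of _ S] intro!: sum.cong)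

context grp begin

definition regrep :: "'a list \<Rightarrow> 'a \<Rightarrow> complex mat" where
  "regrep els g = mat (length els) (length els) (\<lambda>(i,j). if els!i = g \<otimes> els!j then 1 else 0)"

lemma solve_eq: "a \<in> carrier G \<Longrightarrow> b \<in> carrier G \<Longrightarrow> g \<in> carrier G \<Longrightarrow> (b = g \<otimes> a) \<longleftrightarrow> (a = inv g \<otimes> b)"
  using inv_cancel1 inv_cancel2 by auto

lemma regrep_urep:
  assumes els: "set els = carrier G" "distinct els"
  shows "urep G (length els) (regrep els)"
proof -
  let ?n = "length els"
  have ec: "\<And>i. i < ?n \<Longrightarrow> els!i \<in> carrier G" using els nth_mem by blast
  have uniq: "\<And>i j. i < ?n \<Longrightarrow> j < ?n \<Longrightarrow> els!i = els!j \<longleftrightarrow> i = j" using els(2) nth_eq_iff_index_eq by blast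
  have ex: "\<And>x. x \<in> carrier G \<Longrightarrow> \<exists>k<?n. els!k = x" using els(1) by (metis in_set_conv_nth)
  have carr: "regrep els g \<in> carrier_mat ?n ?n" for g unfolding regrep_def by simp
  have one: "regrep els \<one> = 1\<^sub>m ?n"
    unfolding regrep_def using ec uniq by (intro eq_matI) auto
  have mult: "regrep els (g \<otimes> h) = regrep els g * regrep els h" if g: "g \<in> carrier G" and h: "h \<in> carrier G" for g h
  proof (rule eq_matI)
    fix i j assume "i < dim_row (regrep els g * regrep els h)" "j < dim_col (regrep els g * regrep els h)"
    hence ij: "i < ?n" "j < ?n" unfolding regrep_def by auto
    obtain k0 where k0: "k0 < ?n" "els!k0 = h \<otimes> els!j" using ex[of "h \<otimes> els!j"] h ec[OF ij(2)] by auto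
    have "(regrep els g * regrep els h) $$ (i,j) =
        (\<Sum>k<?n. (if els!i = g \<otimes> els!k then 1 else 0) * (if els!k = h \<otimes> els!j then 1 else 0))"
      using ij unfolding regrep_def by (subst mult_index_sum[of _ ?n ?n]) auto
    also have "\<dots> = (\<Sum>k<?n. if k = k0 then (if els!i = g \<otimes> els!k0 then 1 else 0) else 0)"
    proof (rule sum.cong[OF refl])
      fix k assume "k \<in> {..<?n}"
      hence k: "k < ?n" by simp
      have "els!k = h \<otimes> els!j \<longleftrightarrow> k = k0" using uniq[OF k k0(1)] k0(2) by auto
      thus "(if els!i = g \<otimes> els!k then 1 else 0) * (if els!k = h \<otimes> els!j then 1 else 0)
          = (if k = k0 then (if els!i = g \<otimes> els!k0 then 1 else 0) else (0::complex))" by auto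
    qed
    also have "\<dots> = (if els!i = g \<otimes> els!k0 then 1 else 0)" using k0(1) by (simp add: sum.delta)
    also have "g \<otimes> els!k0 = g \<otimes> h \<otimes> els!j" using k0(2) g h ec[OF ij(2)] by (simp add: m_assoc)
    finally show "regrep els (g \<otimes> h) $$ (i,j) = (regrep els g * regrep els h) $$ (i,j)"
      unfolding regrep_def using ij by simp
  qed (auto simp: regrep_def)
  have adjr: "adj (regrep els g) = regrep els (inv g)" if g: "g \<in> carrier G" for g
  proof (rule eq_matI)
    fix i j assume "i < dim_row (regrep els (inv g))" "j < dim_col (regrep els (inv g))"
    hence ij: "i < ?n" "j < ?n" unfolding regrep_def by auto
    have "els!j = g \<otimes> els!i \<longleftrightarrow> els!i = inv g \<otimes> els!j" by (rule solve_eq[OF ec[OF ij(1)] ec[OF ij(2)] g])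
    thus "adj (regrep els g) $$ (i,j) = regrep els (inv g) $$ (i,j)" unfolding regrep_def using ij by simp
  qed (auto simp: regrep_def)
  show ?thesis unfolding urep_def is_rep_def using carr one mult adjr by auto
qed

lemma regrep_msum_index:
  assumes els: "set els = carrier G" "distinct els" and fin: "finite (carrier G)"
    and i: "i < length els" and j: "j < length els" and j1: "els!j = \<one>"
  shows "msum (length els) (length els) (\<lambda>g. h g \<cdot>\<^sub>m regrep els g) (carrier G) $$ (i,j) = h (els!i)"
proof -
  have ei: "els!i \<in> carrier G" using els i nth_mem by blast
  have "msum (length els) (length els) (\<lambda>g. h g \<cdot>\<^sub>m regrep els g) (carrier G) $$ (i,j) =
      (\<Sum>g\<in>carrier G. if g = els!i then h g else 0)"
    using i j j1 ei unfolding regrep_def by (auto intro!: sum.cong)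
  also have "\<dots> = h (els!i)" using fin ei by (simp add: sum.delta')
  finally show ?thesis .
qed

lemma Irr_obtain:
  assumes "\<chi> \<in> Irr G"
  obtains d \<sigma> where "irreducible_rep G d \<sigma>" "\<chi> = character_of G \<sigma>"
  using assms unfolding Irr_def by auto

lemma character_of_in: "g \<in> carrier G \<Longrightarrow> character_of G \<sigma> g = mat_tr (\<sigma> g)"
  unfolding character_of_def by simp

lemma completeness:
  assumes fin: "finite (carrier G)"
    and cls: "\<And>x g. x \<in> carrier G \<Longrightarrow> g \<in> carrier G \<Longrightarrow> f (x \<otimes> g \<otimes> inv x) = f g"
    and orth: "\<And>\<chi>. \<chi> \<in> Irr G \<Longrightarrow> (\<Sum>g\<in>carrier G. f g * cnj (\<chi> g)) = 0"
    and g: "g \<in> carrier G"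
  shows "f g = 0"
proof -
  define h where "h g = f (inv g)" for g
  have H: "\<forall>d \<sigma>. irreducible_rep G d \<sigma> \<longrightarrow> msum d d (\<lambda>g. h g \<cdot>\<^sub>m \<sigma> g) (carrier G) = 0\<^sub>m d d"
  proof (intro allI impI)
    fix d \<sigma> assume irr: "irreducible_rep G d \<sigma>"
    have rs: "is_rep G d \<sigma>" and d: "d > 0" using irr unfolding irreducible_rep_def by auto
    have sc: "\<And>g. g \<in> carrier G \<Longrightarrow> \<sigma> g \<in> carrier_mat d d" using rep_carrier[OF rs] .
    let ?M = "msum d d (\<lambda>g. h g \<cdot>\<^sub>m \<sigma> g) (carrier G)"
    have M: "?M \<in> carrier_mat d d" by simp
    have conjM: "\<sigma> x * ?M * \<sigma> (inv x) = ?M" if x: "x \<in> carrier G" for x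
    proof -
      have xi: "inv x \<in> carrier G" using x by simp
      have "\<sigma> x * ?M = msum d d (\<lambda>g. \<sigma> x * (h g \<cdot>\<^sub>m \<sigma> g)) (carrier G)"
        using sc x by (intro msum_mult_left) auto
      also have "\<dots> * \<sigma> (inv x) = msum d d (\<lambda>g. \<sigma> x * (h g \<cdot>\<^sub>m \<sigma> g) * \<sigma> (inv x)) (carrier G)"
        using sc x xi by (intro msum_mult_right) (auto intro!: mult_carrier_mat[of _ d d _ d])
      also have "\<dots> = msum d d (\<lambda>g. (\<lambda>g. h g \<cdot>\<^sub>m \<sigma> g) (x \<otimes> g \<otimes> inv x)) (carrier G)"
      proof (rule msum_cong)
        fix g assume g: "g \<in> carrier G"
        have e1: "\<sigma> x * (h g \<cdot>\<^sub>m \<sigma> g) * \<sigma> (inv x) = h g \<cdot>\<^sub>m (\<sigma> x * \<sigma> g * \<sigma> (inv x))"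
          using sc[OF x] sc[OF g] sc[OF xi]
          by (simp add: mult_smult_distrib[of _ d d _ d] mult_smult_assoc_mat[of _ d d _ d])
        have e2: "\<sigma> x * \<sigma> g * \<sigma> (inv x) = \<sigma> (x \<otimes> g \<otimes> inv x)"
          using rep_mult[OF rs] x g xi by simp
        have e3: "h (x \<otimes> g \<otimes> inv x) = h g"
        proof -
          have "inv (x \<otimes> g \<otimes> inv x) = x \<otimes> inv g \<otimes> inv x" using x g by (simp add: inv_mult_group m_assoc)
          thus ?thesis unfolding h_def using cls[OF x, of "inv g"] g by simp
        qed
        show "\<sigma> x * (h g \<cdot>\<^sub>m \<sigma> g) * \<sigma> (inv x) = (\<lambda>g. h g \<cdot>\<^sub>m \<sigma> g) (x \<otimes> g \<otimes> inv x)"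
          unfolding e1 e2 e3 by simp
      qed
      also have "\<dots> = ?M" by (rule msum_reindex[OF bij_conjg[OF x]])
      finally show ?thesis .
    qed
    have comm: "?M * \<sigma> x = \<sigma> x * ?M" if x: "x \<in> carrier G" for x
    proof -
      have xi: "inv x \<in> carrier G" using x by simp
      have "?M * \<sigma> x = \<sigma> x * ?M * \<sigma> (inv x) * \<sigma> x" using conjM[OF x] by simp
      also have "\<dots> = \<sigma> x * ?M * (\<sigma> (inv x) * \<sigma> x)"
        using sc[OF x] sc[OF xi] M by (intro assoc_mult_mat) auto
      also have "\<dots> = \<sigma> x * ?M" using rep_inv_l[OF rs x] sc[OF x] M by simp
      finally show ?thesis .
    qed
    obtain c where c: "?M = c \<cdot>\<^sub>m 1\<^sub>m d" using schur_scalar[OF irr M comm] by metis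
    have "mat_tr ?M = (\<Sum>g\<in>carrier G. h g * mat_tr (\<sigma> g))"
      using sc by (subst mat_tr_msum) (auto simp: mat_tr_smult[of _ d])
    also have "\<dots> = (\<Sum>g\<in>carrier G. f g * mat_tr (\<sigma> (inv g)))"
      unfolding h_def using sum.reindex_bij_betw[OF bij_inv, of "\<lambda>g. f (inv g) * mat_tr (\<sigma> g)"]
      by simp
    also have "\<dots> = (\<Sum>g\<in>carrier G. f g * cnj (character_of G \<sigma> g))"
      using char_conj_inv[OF fin rs] by (intro sum.cong) (auto simp: character_of_in)
    also have "\<dots> = 0" using orth[of "character_of G \<sigma>"] irr unfolding Irr_def by blast
    finally have "c * of_nat d = 0" unfolding c by (simp add: mat_tr_smult[of _ d])
    hence "c = 0" using d by simp
    thus "?M = 0\<^sub>m d d" unfolding c by auto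
  qed
  obtain els where els: "set els = carrier G" "distinct els" using finite_distinct_list[OF fin] by auto
  have z: "msum (length els) (length els) (\<lambda>g. h g \<cdot>\<^sub>m regrep els g) (carrier G) = 0\<^sub>m (length els) (length els)"
    using decomp[OF group_axioms H regrep_urep[OF els]] .
  obtain j where j: "j < length els" "els!j = \<one>" using els by (metis in_set_conv_nth one_closed)
  obtain i where i: "i < length els" "els!i = inv g" using els g by (metis in_set_conv_nth inv_closed)
  have "h (els!i) = 0" using regrep_msum_index[OF els fin i(1) j, of h] z i j by simp
  thus ?thesis unfolding h_def using i g by simp
qed

end

context grp begin

lemma char_cls:
  assumes "\<chi> \<in> Irr G" "x \<in> carrier G" "g \<in> carrier G"
  shows "\<chi> (x \<otimes> g \<otimes> inv x) = \<chi> g"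
proof -
  obtain d \<sigma> where irr: "irreducible_rep G d \<sigma>" and chi: "\<chi> = character_of G \<sigma>" using Irr_obtain[OF assms(1)] .
  have rs: "is_rep G d \<sigma>" using irr unfolding irreducible_rep_def by auto
  show ?thesis unfolding chi using assms(2,3) char_conjg[OF rs assms(3,2)] by (simp add: character_of_in)
qed

lemma char_inv:
  assumes fin: "finite (carrier G)" and "\<chi> \<in> Irr G" "g \<in> carrier G"
  shows "\<chi> (inv g) = cnj (\<chi> g)"
proof -
  obtain d \<sigma> where irr: "irreducible_rep G d \<sigma>" and chi: "\<chi> = character_of G \<sigma>" using Irr_obtain[OF assms(2)] .
  have rs: "is_rep G d \<sigma>" using irr unfolding irreducible_rep_def by auto
  show ?thesis unfolding chi using assms(3) char_conj_inv[OF fin rs assms(3)] by (simp add: character_of_in)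
qed

lemma char_out: "\<chi> \<in> Irr G \<Longrightarrow> g \<notin> carrier G \<Longrightarrow> \<chi> g = 0"
  by (auto elim!: Irr_obtain simp: character_of_def)

lemma row_orth:
  assumes fin: "finite (carrier G)" and c1: "\<chi>1 \<in> Irr G" and c2: "\<chi>2 \<in> Irr G"
  shows "(\<Sum>g\<in>carrier G. \<chi>1 g * cnj (\<chi>2 g)) = (if \<chi>1 = \<chi>2 then of_nat (card (carrier G)) else 0)"
proof -
  obtain d \<sigma> where irs: "irreducible_rep G d \<sigma>" and ch1: "\<chi>1 = character_of G \<sigma>" using Irr_obtain[OF c1] .
  obtain e \<tau> where irt: "irreducible_rep G e \<tau>" and ch2: "\<chi>2 = character_of G \<tau>" using Irr_obtain[OF c2] .
  have "(\<Sum>g\<in>carrier G. \<chi>1 g * cnj (\<chi>2 g)) = (\<Sum>g\<in>carrier G. mat_tr (\<sigma> g) * \<chi>2 (inv g))"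
    using char_inv[OF fin c2] by (intro sum.cong) (auto simp: ch1 character_of_in)
  also have "\<dots> = (\<Sum>g\<in>carrier G. mat_tr (\<sigma> g) * mat_tr (\<tau> (inv g)))"
    by (intro sum.cong) (auto simp: ch2 character_of_in)
  finally have eq: "(\<Sum>g\<in>carrier G. \<chi>1 g * cnj (\<chi>2 g)) = (\<Sum>g\<in>carrier G. mat_tr (\<sigma> g) * mat_tr (\<tau> (inv g)))" .
  show ?thesis
  proof (cases "\<chi>1 = \<chi>2")
    case True
    have "(\<Sum>g\<in>carrier G. mat_tr (\<sigma> g) * mat_tr (\<tau> (inv g))) = (\<Sum>g\<in>carrier G. mat_tr (\<sigma> g) * mat_tr (\<sigma> (inv g)))"
    proof (intro sum.cong refl)
      fix g assume "g \<in> carrier G"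
      hence "inv g \<in> carrier G" by simp
      hence "\<chi>1 (inv g) = \<chi>2 (inv g)" using True by simp
      hence "mat_tr (\<tau> (inv g)) = mat_tr (\<sigma> (inv g))" using \<open>inv g \<in> carrier G\<close> by (simp add: ch1 ch2 character_of_in)
      thus "mat_tr (\<sigma> g) * mat_tr (\<tau> (inv g)) = mat_tr (\<sigma> g) * mat_tr (\<sigma> (inv g))" by simp
    qed
    also have "\<dots> = of_nat (card (carrier G))" by (rule orth_same[OF fin irs])
    finally show ?thesis using eq True by simp
  next
    case False
    have "\<exists>g\<in>carrier G. mat_tr (\<sigma> g) \<noteq> mat_tr (\<tau> g)"
    proof (rule ccontr)
      assume "\<not> ?thesis"
      hence "\<chi>1 = \<chi>2" unfolding ch1 ch2 character_of_def by (intro ext) auto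
      thus False using False by simp
    qed
    hence "(\<Sum>g\<in>carrier G. mat_tr (\<sigma> g) * mat_tr (\<tau> (inv g))) = 0" by (rule orth_diff[OF fin irt irs])
    thus ?thesis using eq False by simp
  qed
qed

lemma sum_els:
  assumes "set els = carrier G" "distinct els"
  shows "(\<Sum>g\<in>carrier G. F g) = (\<Sum>i<length els. F (els!i))"
  using sum.reindex_bij_betw[OF bij_betw_nth[OF assms(2) refl assms(1)[symmetric]], of F] by simp

lemma Irr_finite_card:
  assumes fin: "finite (carrier G)" and S: "S \<subseteq> Irr G" "finite S"
  shows "card S \<le> card (carrier G)"
proof -
  obtain els where els: "set els = carrier G" "distinct els" using finite_distinct_list[OF fin] by auto
  obtain chis where chis: "set chis = S" "distinct chis" using finite_distinct_list[OF S(2)] by auto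
  let ?n = "card (carrier G)"
  have len: "length els = ?n" using els distinct_card by fastforce
  have n0: "?n > 0" using fin card_gt_0_iff by auto
  define c where "c = complex_of_real (1 / sqrt (real ?n))"
  define v where "v \<chi> = vec ?n (\<lambda>i. c * \<chi> (els!i))" for \<chi> :: "'a \<Rightarrow> complex"
  have cc: "c * cnj c = 1 / of_nat ?n"
  proof -
    have "c * cnj c = complex_of_real ((1 / sqrt (real ?n)) * (1 / sqrt (real ?n)))" unfolding c_def complex_cnj_complex_of_real of_real_mult[symmetric] by (rule refl)
    also have "(1 / sqrt (real ?n)) * (1 / sqrt (real ?n)) = 1 / (sqrt (real ?n) * sqrt (real ?n))" by simp
    also have "sqrt (real ?n) * sqrt (real ?n) = real ?n" by simp
    finally show ?thesis by (simp only: of_real_divide of_real_1 of_real_of_nat_eq)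
  qed
  have ipv: "ip (v \<chi>1) (v \<chi>2) = (if \<chi>1 = \<chi>2 then 1 else 0)" if "\<chi>1 \<in> Irr G" "\<chi>2 \<in> Irr G" for \<chi>1 \<chi>2
  proof -
    have "ip (v \<chi>1) (v \<chi>2) = (\<Sum>i<?n. (c * cnj c) * (\<chi>1 (els!i) * cnj (\<chi>2 (els!i))))"
      unfolding ip_def v_def by (intro sum.cong) (auto simp: mult_ac)
    also have "\<dots> = (c * cnj c) * (\<Sum>g\<in>carrier G. \<chi>1 g * cnj (\<chi>2 g))"
      using sum_els[OF els, of "\<lambda>g. \<chi>1 g * cnj (\<chi>2 g)"] len by (simp add: sum_distrib_left)
    also have "\<dots> = (if \<chi>1 = \<chi>2 then 1 else 0)" unfolding cc row_orth[OF fin that] using n0 by simp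
    finally show ?thesis .
  qed
  have "orthonormal ?n (map v chis)"
    unfolding orthonormal_def
  proof (intro conjI allI impI)
    show "set (map v chis) \<subseteq> carrier_vec ?n" unfolding v_def by auto
    fix i j assume "i < length (map v chis)" "j < length (map v chis)"
    hence ij: "i < length chis" "j < length chis" by auto
    have "chis!i \<in> Irr G" "chis!j \<in> Irr G" using ij chis S(1) nth_mem by blast+
    moreover have "chis!i = chis!j \<longleftrightarrow> i = j" using chis(2) ij nth_eq_iff_index_eq by blast
    ultimately show "ip (map v chis ! i) (map v chis ! j) = (if i = j then 1 else 0)" using ij ipv by auto
  qed
  hence "length chis \<le> ?n" using orth_len by fastforce
  thus ?thesis using chis distinct_card by fastforce
qed

lemma Irr_finite:
  assumes fin: "finite (carrier G)"
  shows "finite (Irr G)"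
proof (rule ccontr)
  assume "infinite (Irr G)"
  then obtain B where B: "finite B" "card B = Suc (card (carrier G))" "B \<subseteq> Irr G"
    using infinite_arbitrarily_large[of "Irr G" "Suc (card (carrier G))"] by blast
  have "card B \<le> card (carrier G)" by (rule Irr_finite_card[OF fin B(3) B(1)])
  thus False using B(2) by simp
qed

end

context grp begin

lemma cc_mem: "y \<in> conj_class G h \<longleftrightarrow> (\<exists>k\<in>carrier G. y = k \<otimes> h \<otimes> inv k)"
  unfolding conj_class_def by auto

lemma cc_sub: "h \<in> carrier G \<Longrightarrow> conj_class G h \<subseteq> carrier G"
  unfolding conj_class_def by auto

lemma cc_self: "h \<in> carrier G \<Longrightarrow> h \<in> conj_class G h"
  unfolding cc_mem by (intro bexI[of _ \<one>]) auto

lemma cc_finite: "finite (carrier G) \<Longrightarrow> h \<in> carrier G \<Longrightarrow> finite (conj_class G h)"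
  using cc_sub finite_subset by blast

lemma cc_conj:
  assumes x: "x \<in> carrier G" and y: "y \<in> carrier G" and h: "h \<in> carrier G"
  shows "x \<otimes> y \<otimes> inv x \<in> conj_class G h \<longleftrightarrow> y \<in> conj_class G h"
proof
  assume "y \<in> conj_class G h"
  then obtain k where k: "k \<in> carrier G" "y = k \<otimes> h \<otimes> inv k" unfolding cc_mem by auto
  have "x \<otimes> y \<otimes> inv x = (x \<otimes> k) \<otimes> h \<otimes> inv (x \<otimes> k)"
    using x k h by (simp add: m_assoc inv_mult_group)
  thus "x \<otimes> y \<otimes> inv x \<in> conj_class G h" unfolding cc_mem using x k by blast
next
  assume "x \<otimes> y \<otimes> inv x \<in> conj_class G h"
  then obtain k where k: "k \<in> carrier G" "x \<otimes> y \<otimes> inv x = k \<otimes> h \<otimes> inv k" unfolding cc_mem by auto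
  have "y = inv x \<otimes> (x \<otimes> y \<otimes> inv x) \<otimes> x" using x y by (simp add: m_assoc inv_cancel1)
  also have "\<dots> = (inv x \<otimes> k) \<otimes> h \<otimes> inv (inv x \<otimes> k)"
    unfolding k(2) using x k h by (simp add: m_assoc inv_mult_group)
  finally show "y \<in> conj_class G h" unfolding cc_mem using x k by blast
qed

lemma cc_eq:
  assumes h: "h \<in> carrier G" and h': "h' \<in> conj_class G h"
  shows "conj_class G h' = conj_class G h"
proof -
  obtain k where k: "k \<in> carrier G" "h' = k \<otimes> h \<otimes> inv k" using h' unfolding cc_mem by auto
  have hc: "h' \<in> carrier G" using k h by simp
  show ?thesis
  proof (intro equalityI subsetI)
    fix y assume "y \<in> conj_class G h'"
    then obtain l where l: "l \<in> carrier G" "y = l \<otimes> h' \<otimes> inv l" unfolding cc_mem by auto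
    have "y = (l \<otimes> k) \<otimes> h \<otimes> inv (l \<otimes> k)" unfolding l(2) k(2) using l k h by (simp add: m_assoc inv_mult_group)
    thus "y \<in> conj_class G h" unfolding cc_mem using l k by blast
  next
    fix y assume "y \<in> conj_class G h"
    then obtain l where l: "l \<in> carrier G" "y = l \<otimes> h \<otimes> inv l" unfolding cc_mem by auto
    have "(l \<otimes> inv k) \<otimes> h' \<otimes> inv (l \<otimes> inv k) = l \<otimes> h \<otimes> inv l"
      unfolding k(2) using l k h by (simp add: m_assoc inv_mult_group inv_cancel1 inv_cancel2)
    hence "y = (l \<otimes> inv k) \<otimes> h' \<otimes> inv (l \<otimes> inv k)" unfolding l(2) by simp
    thus "y \<in> conj_class G h'" unfolding cc_mem using l k by blast
  qed
qed

lemma cc_sym: "g \<in> carrier G \<Longrightarrow> h \<in> carrier G \<Longrightarrow> g \<in> conj_class G h \<longleftrightarrow> h \<in> conj_class G g"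
  using cc_eq cc_self by blast

lemma char_cc: "\<chi> \<in> Irr G \<Longrightarrow> h \<in> carrier G \<Longrightarrow> y \<in> conj_class G h \<Longrightarrow> \<chi> y = \<chi> h"
  unfolding cc_mem using char_cls by auto

lemma col_orth:
  assumes fin: "finite (carrier G)" and g: "g \<in> carrier G" and h: "h \<in> carrier G"
  shows "(\<Sum>\<chi>\<in>Irr G. \<chi> g * cnj (\<chi> h)) =
    (if g \<in> conj_class G h then of_nat (card (carrier G)) / of_nat (card (conj_class G h)) else 0)"
proof -
  let ?n = "card (carrier G)" and ?C = "conj_class G h"
  have n0: "?n > 0" using fin card_gt_0_iff by auto
  have C0: "card ?C > 0" using cc_finite[OF fin h] cc_self[OF h] card_gt_0_iff by auto
  have finI: "finite (Irr G)" by (rule Irr_finite[OF fin])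
  define f where "f x = (if x \<in> ?C then 1 else (0::complex))" for x
  define q where "q = (of_nat (card ?C) / of_nat ?n :: complex)"
  define a where "a \<chi> = q * cnj (\<chi> h)" for \<chi> :: "'a \<Rightarrow> complex"
  define F where "F x = f x - (\<Sum>\<chi>\<in>Irr G. a \<chi> * \<chi> x)" for x
  have Fcls: "F (x \<otimes> y \<otimes> inv x) = F y" if x: "x \<in> carrier G" and y: "y \<in> carrier G" for x y
  proof -
    have "(\<Sum>\<chi>\<in>Irr G. a \<chi> * \<chi> (x \<otimes> y \<otimes> inv x)) = (\<Sum>\<chi>\<in>Irr G. a \<chi> * \<chi> y)"
      by (rule sum.cong) (auto simp: char_cls[OF _ x y])
    thus ?thesis unfolding F_def f_def using cc_conj[OF x y h] by simp
  qed
  have sumf: "(\<Sum>y\<in>carrier G. f y * cnj (\<chi> y)) = of_nat (card ?C) * cnj (\<chi> h)" if chi: "\<chi> \<in> Irr G" for \<chi>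
  proof -
    have "(\<Sum>y\<in>carrier G. f y * cnj (\<chi> y)) = (\<Sum>y\<in>carrier G. if y \<in> ?C then cnj (\<chi> y) else 0)"
      unfolding f_def by (intro sum.cong) auto
    also have "\<dots> = (\<Sum>y\<in>carrier G \<inter> ?C. cnj (\<chi> y))" using fin by (simp add: sum.inter_restrict)
    also have "\<dots> = (\<Sum>y\<in>?C. cnj (\<chi> y))" using cc_sub[OF h] by (simp add: Int_absorb1)
    also have "\<dots> = (\<Sum>y\<in>?C. cnj (\<chi> h))" using char_cc[OF chi h] by simp
    finally show ?thesis by simp
  qed
  have Forth: "(\<Sum>y\<in>carrier G. F y * cnj (\<chi>' y)) = 0" if chi': "\<chi>' \<in> Irr G" for \<chi>'
  proof -
    have "(\<Sum>y\<in>carrier G. F y * cnj (\<chi>' y)) =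
        (\<Sum>y\<in>carrier G. f y * cnj (\<chi>' y)) - (\<Sum>\<chi>\<in>Irr G. a \<chi> * (\<Sum>y\<in>carrier G. \<chi> y * cnj (\<chi>' y)))"
      unfolding F_def by (simp add: left_diff_distrib sum_subtractf sum_distrib_left sum_distrib_right sum.swap[of _ "carrier G"] mult.assoc)
    also have "(\<Sum>\<chi>\<in>Irr G. a \<chi> * (\<Sum>y\<in>carrier G. \<chi> y * cnj (\<chi>' y))) =
        (\<Sum>\<chi>\<in>Irr G. if \<chi> = \<chi>' then a \<chi> * of_nat ?n else 0)"
      using row_orth[OF fin _ chi'] by (intro sum.cong) auto
    also have "\<dots> = a \<chi>' * of_nat ?n" using chi' finI by (simp add: sum.delta')
    finally show ?thesis unfolding sumf[OF chi'] a_def q_def using n0 by simp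
  qed
  have "F g = 0" by (rule completeness[OF fin Fcls Forth g])
  hence "f g = (\<Sum>\<chi>\<in>Irr G. a \<chi> * \<chi> g)" unfolding F_def by simp
  also have "\<dots> = q * (\<Sum>\<chi>\<in>Irr G. \<chi> g * cnj (\<chi> h))"
    unfolding a_def by (simp add: sum_distrib_left mult_ac)
  finally have "(\<Sum>\<chi>\<in>Irr G. \<chi> g * cnj (\<chi> h)) = (of_nat ?n / of_nat (card ?C)) * f g"
    unfolding q_def using n0 C0 by (simp add: field_simps)
  thus ?thesis unfolding f_def by simp
qed

end

lemma sum_twist_zero:
  fixes \<psi> :: "'b \<Rightarrow> complex"
  assumes bij: "bij_betw f A A" and tw: "\<And>a. a \<in> A \<Longrightarrow> \<psi> (f a) = c * \<psi> a" and c: "c \<noteq> 1"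
  shows "sum \<psi> A = 0"
proof -
  have "sum \<psi> A = sum (\<lambda>a. \<psi> (f a)) A" using sum.reindex_bij_betw[OF bij, of \<psi>] by simp
  also have "\<dots> = c * sum \<psi> A" using tw by (simp add: sum_distrib_left)
  finally have "(1 - c) * sum \<psi> A = 0" by (simp add: algebra_simps)
  thus ?thesis using c by simp
qed

lemma dim1_irr:
  assumes "invariant_subspace G 1 \<rho> W"
  shows "W = {0\<^sub>v 1} \<or> W = carrier_vec 1"
proof (cases "W = {0\<^sub>v 1}")
  case False
  have WC: "W \<subseteq> carrier_vec 1" and z: "0\<^sub>v 1 \<in> W" and sm: "\<And>c v. v \<in> W \<Longrightarrow> c \<cdot>\<^sub>v v \<in> W"
    using assms unfolding invariant_subspace_def by auto
  obtain w where w: "w \<in> W" "w \<noteq> 0\<^sub>v 1" using False z by blast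
  have wc: "w \<in> carrier_vec 1" using w WC by auto
  have w0: "w $ 0 \<noteq> 0"
  proof
    assume "w $ 0 = 0"
    hence "w = 0\<^sub>v 1" using wc by (intro eq_vecI) auto
    thus False using w by simp
  qed
  have "v \<in> W" if v: "v \<in> carrier_vec 1" for v
  proof -
    have "v = (v $ 0 / w $ 0) \<cdot>\<^sub>v w" using v wc w0 by (intro eq_vecI) auto
    thus ?thesis using sm[OF w(1)] by metis
  qed
  thus ?thesis using WC by auto
qed simp

lemma mat_tr_1: "A \<in> carrier_mat 1 1 \<Longrightarrow> mat_tr A = A $$ (0,0)"
  unfolding mat_tr_def by auto

context grp begin

lemma deg_irr:
  assumes "\<chi> \<in> Irr G"
  obtains d \<sigma> where "irreducible_rep G d \<sigma>" "\<chi> = character_of G \<sigma>" "deg G \<chi> = of_nat d" "d \<in> cd G" "d > 0"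
proof -
  obtain d \<sigma> where irr: "irreducible_rep G d \<sigma>" and chi: "\<chi> = character_of G \<sigma>" using Irr_obtain[OF assms] .
  have rs: "is_rep G d \<sigma>" and d: "d > 0" using irr unfolding irreducible_rep_def by auto
  have "deg G \<chi> = of_nat d" unfolding deg_def chi using rep_one[OF rs] by (simp add: character_of_in)
  moreover have "d \<in> cd G" unfolding cd_def using irr by auto
  ultimately show ?thesis using that irr chi d by blast
qed

definition Lin where "Lin = {\<chi> \<in> Irr G. deg G \<chi> = 1}"

lemma Lin_rep:
  assumes "\<chi> \<in> Lin"
  obtains \<sigma> where "irreducible_rep G 1 \<sigma>" "\<chi> = character_of G \<sigma>"
proof -
  have c: "\<chi> \<in> Irr G" and dg: "deg G \<chi> = 1" using assms unfolding Lin_def by auto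
  obtain d \<sigma> where "irreducible_rep G d \<sigma>" "\<chi> = character_of G \<sigma>" "deg G \<chi> = of_nat d" using deg_irr[OF c] by metis
  moreover have "d = 1" using calculation(3) dg by simp
  ultimately show ?thesis using that by blast
qed

lemma Lin_mult:
  assumes "\<chi> \<in> Lin" "x \<in> carrier G" "y \<in> carrier G"
  shows "\<chi> (x \<otimes> y) = \<chi> x * \<chi> y"
proof -
  obtain \<sigma> where irr: "irreducible_rep G 1 \<sigma>" and chi: "\<chi> = character_of G \<sigma>" using Lin_rep[OF assms(1)] .
  have rs: "is_rep G 1 \<sigma>" using irr unfolding irreducible_rep_def by auto
  have sc: "\<And>g. g \<in> carrier G \<Longrightarrow> \<sigma> g \<in> carrier_mat 1 1" using rep_carrier[OF rs] .
  have "\<sigma> (x \<otimes> y) $$ (0,0) = \<sigma> x $$ (0,0) * \<sigma> y $$ (0,0)"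
    using rep_mult[OF rs assms(2,3)] mult_index_sum[OF sc[OF assms(2)] sc[OF assms(3)], of 0 0] by simp
  thus ?thesis unfolding chi using assms(2,3) sc by (simp add: character_of_in mat_tr_1)
qed

lemma Lin_Irr: "\<chi> \<in> Lin \<Longrightarrow> \<chi> \<in> Irr G" unfolding Lin_def by auto

lemma Lin_one: "\<chi> \<in> Lin \<Longrightarrow> \<chi> \<one> = 1" unfolding Lin_def deg_def by auto

lemma Lin_norm:
  assumes fin: "finite (carrier G)" and "\<chi> \<in> Lin" "g \<in> carrier G"
  shows "\<chi> g * cnj (\<chi> g) = 1"
proof -
  have "\<chi> g * \<chi> (inv g) = \<chi> \<one>" using Lin_mult[OF assms(2) assms(3) inv_closed[OF assms(3)]] assms(3) by simp
  thus ?thesis using Lin_one[OF assms(2)] char_inv[OF fin Lin_Irr[OF assms(2)] assms(3)] by simp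
qed

lemma rep1_irr:
  assumes "is_rep G 1 \<rho>" shows "irreducible_rep G 1 \<rho>"
  unfolding irreducible_rep_def using assms dim1_irr by auto

lemma Lin_prod:
  assumes "\<chi> \<in> Lin" "\<mu> \<in> Lin"
  shows "(\<lambda>g. \<chi> g * \<mu> g) \<in> Lin"
proof -
  define \<rho> where "\<rho> g = mat 1 1 (\<lambda>_. \<chi> g * \<mu> g)" for g
  have "is_rep G 1 \<rho>" unfolding is_rep_def
  proof (intro conjI ballI)
    show "\<rho> \<one> = 1\<^sub>m 1" unfolding \<rho>_def using Lin_one[OF assms(1)] Lin_one[OF assms(2)] by (intro eq_matI) auto
    fix g h assume g: "g \<in> carrier G" and h: "h \<in> carrier G"
    show "\<rho> (g \<otimes> h) = \<rho> g * \<rho> h" unfolding \<rho>_def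
      using Lin_mult[OF assms(1) g h] Lin_mult[OF assms(2) g h] by (intro eq_matI) (auto simp: scalar_prod_def)
  qed (auto simp: \<rho>_def)
  hence irr: "irreducible_rep G 1 \<rho>" by (rule rep1_irr)
  have "character_of G \<rho> = (\<lambda>g. \<chi> g * \<mu> g)"
  proof
    fix g show "character_of G \<rho> g = \<chi> g * \<mu> g"
      using char_out[OF Lin_Irr[OF assms(1)]] unfolding character_of_def \<rho>_def mat_tr_def by auto
  qed
  hence "(\<lambda>g. \<chi> g * \<mu> g) \<in> Irr G" unfolding Irr_def using irr by (intro CollectI exI[of _ 1] exI[of _ \<rho>]) simp
  moreover have "deg G (\<lambda>g. \<chi> g * \<mu> g) = 1" unfolding deg_def using Lin_one[OF assms(1)] Lin_one[OF assms(2)] by simp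
  ultimately show ?thesis unfolding Lin_def by simp
qed

definition triv where "triv = character_of G (\<lambda>_. 1\<^sub>m 1)"

lemma triv_Lin: "triv \<in> Lin"
proof -
  have "is_rep G 1 (\<lambda>_. 1\<^sub>m 1)" unfolding is_rep_def by auto
  hence "irreducible_rep G 1 (\<lambda>_. 1\<^sub>m 1)" by (rule rep1_irr)
  hence "triv \<in> Irr G" unfolding Irr_def triv_def by blast
  moreover have "deg G triv = 1" unfolding deg_def triv_def character_of_def by simp
  ultimately show ?thesis unfolding Lin_def by simp
qed

lemma triv_val: "g \<in> carrier G \<Longrightarrow> triv g = 1"
  unfolding triv_def character_of_def by simp

lemma sum_char:
  assumes fin: "finite (carrier G)" and "\<chi> \<in> Irr G"
  shows "(\<Sum>g\<in>carrier G. \<chi> g) = (if \<chi> = triv then of_nat (card (carrier G)) else 0)"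
proof -
  have "(\<Sum>g\<in>carrier G. \<chi> g) = (\<Sum>g\<in>carrier G. \<chi> g * cnj (triv g))" by (simp add: triv_val)
  also have "\<dots> = (if \<chi> = triv then of_nat (card (carrier G)) else 0)"
    by (rule row_orth[OF fin assms(2) Lin_Irr[OF triv_Lin]])
  finally show ?thesis .
qed

lemma Lin_finite: "finite (carrier G) \<Longrightarrow> finite Lin"
  using Irr_finite unfolding Lin_def by auto

lemma Lin_sum:
  assumes fin: "finite (carrier G)" and x: "x \<in> carrier G"
  shows "(\<Sum>l\<in>Lin. l x) = (if \<forall>l\<in>Lin. l x = 1 then of_nat (card Lin) else 0)"
proof (cases "\<forall>l\<in>Lin. l x = 1")
  case True
  hence "(\<Sum>l\<in>Lin. l x) = (\<Sum>l\<in>Lin. 1)" by (intro sum.cong) auto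
  thus ?thesis using True by simp
next
  case False
  then obtain \<mu> where mu: "\<mu> \<in> Lin" "\<mu> x \<noteq> 1" by auto
  define f where "f l = (\<lambda>g. \<mu> g * l g)" for l :: "'a \<Rightarrow> complex"
  have fin': "finite Lin" by (rule Lin_finite[OF fin])
  have sub: "f ` Lin \<subseteq> Lin" unfolding f_def using Lin_prod[OF mu(1)] by auto
  have inj: "inj_on f Lin"
  proof
    fix l1 l2 assume l: "l1 \<in> Lin" "l2 \<in> Lin" and e: "f l1 = f l2"
    show "l1 = l2"
    proof
      fix g
      show "l1 g = l2 g"
      proof (cases "g \<in> carrier G")
        case True
        have "\<mu> g \<noteq> 0" using Lin_norm[OF fin mu(1) True] by auto
        moreover have "\<mu> g * l1 g = \<mu> g * l2 g" using fun_cong[OF e, of g] unfolding f_def .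
        ultimately show ?thesis by simp
      next
        case False thus ?thesis using char_out Lin_Irr l by metis
      qed
    qed
  qed
  have "f ` Lin = Lin" by (rule endo_inj_surj[OF fin' sub inj])
  hence bij: "bij_betw f Lin Lin" using inj unfolding bij_betw_def by simp
  have "(\<Sum>l\<in>Lin. l x) = 0"
    by (rule sum_twist_zero[OF bij, of "\<lambda>l. l x" "\<mu> x"]) (auto simp: f_def mu(2))
  thus ?thesis using False by (simp only: if_False)
qed

end

context grp begin

definition ZZ where "ZZ = {g \<in> carrier G. card (conj_class G g) = 1}"

lemma ZZ_iff: "g \<in> ZZ \<longleftrightarrow> g \<in> carrier G \<and> (\<forall>x\<in>carrier G. x \<otimes> g = g \<otimes> x)"
proof
  assume z: "g \<in> ZZ"
  hence g: "g \<in> carrier G" unfolding ZZ_def by auto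
  have "conj_class G g = {g}" using z cc_self[OF g] unfolding ZZ_def by (metis (mono_tags, lifting) card_1_singletonE mem_Collect_eq singletonD)
  have "x \<otimes> g = g \<otimes> x" if x: "x \<in> carrier G" for x
  proof -
    have "x \<otimes> g \<otimes> inv x \<in> conj_class G g" unfolding cc_mem using x by blast
    hence e: "x \<otimes> g \<otimes> inv x = g" using \<open>conj_class G g = {g}\<close> by simp
    have "x \<otimes> g = x \<otimes> g \<otimes> inv x \<otimes> x" using x g by (simp add: m_assoc)
    also have "\<dots> = g \<otimes> x" using e by simp
    finally show ?thesis .
  qed
  thus "g \<in> carrier G \<and> (\<forall>x\<in>carrier G. x \<otimes> g = g \<otimes> x)" using g by auto
next
  assume a: "g \<in> carrier G \<and> (\<forall>x\<in>carrier G. x \<otimes> g = g \<otimes> x)"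
  have "conj_class G g = {g}"
  proof (intro equalityI subsetI)
    fix y assume "y \<in> conj_class G g"
    then obtain k where k: "k \<in> carrier G" "y = k \<otimes> g \<otimes> inv k" unfolding cc_mem by auto
    have "y = g \<otimes> k \<otimes> inv k" using k a by simp
    also have "\<dots> = g" using k a by (simp add: m_assoc)
    finally show "y \<in> {g}" by simp
  next
    fix y assume "y \<in> {g}" thus "y \<in> conj_class G g" using cc_self a by auto
  qed
  thus "g \<in> ZZ" unfolding ZZ_def using a by auto
qed

lemma ZZ_carrier: "z \<in> ZZ \<Longrightarrow> z \<in> carrier G" unfolding ZZ_def by auto

lemma ZZ_one: "\<one> \<in> ZZ" unfolding ZZ_iff by simp

lemma ZZ_mult: "z \<in> ZZ \<Longrightarrow> z' \<in> ZZ \<Longrightarrow> z \<otimes> z' \<in> ZZ"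
  unfolding ZZ_iff by (metis m_assoc m_closed)

lemma ZZ_inv: assumes "z \<in> ZZ" shows "inv z \<in> ZZ"
proof -
  have z: "z \<in> carrier G" "\<forall>x\<in>carrier G. x \<otimes> z = z \<otimes> x" using assms unfolding ZZ_iff by auto
  have "x \<otimes> inv z = inv z \<otimes> x" if x: "x \<in> carrier G" for x
  proof -
    have e: "x \<otimes> z = z \<otimes> x" using z(2) x by auto
    have zc: "z \<in> carrier G" using z(1) .
    have "inv z \<otimes> x = inv z \<otimes> (x \<otimes> z) \<otimes> inv z" using zc x by (simp add: m_assoc)
    also have "\<dots> = inv z \<otimes> (z \<otimes> x) \<otimes> inv z" using e by simp
    also have "\<dots> = x \<otimes> inv z" using zc x by (simp add: m_assoc inv_cancel1)
    finally show ?thesis by simp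
  qed
  thus ?thesis unfolding ZZ_iff using z by auto
qed

lemma ZZ_bij: "z0 \<in> ZZ \<Longrightarrow> bij_betw (\<lambda>z. z0 \<otimes> z) ZZ ZZ"
  by (rule bij_betw_byWitness[where f' = "\<lambda>z. inv z0 \<otimes> z"])
     (auto simp: ZZ_mult ZZ_inv ZZ_carrier inv_cancel1 inv_cancel2)

lemma ZZ_finite: "finite (carrier G) \<Longrightarrow> finite ZZ" unfolding ZZ_def by auto

lemma central_char:
  assumes fin: "finite (carrier G)" and chi: "\<chi> \<in> Irr G"
  obtains d \<omega> where "deg G \<chi> = of_nat d" "d > 0" "d \<in> cd G"
    "\<And>z. z \<in> ZZ \<Longrightarrow> \<chi> z = of_nat d * \<omega> z"
    "\<And>z z'. z \<in> ZZ \<Longrightarrow> z' \<in> ZZ \<Longrightarrow> \<omega> (z \<otimes> z') = \<omega> z * \<omega> z'"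
    "\<And>z. z \<in> ZZ \<Longrightarrow> \<omega> z * cnj (\<omega> z) = 1"
proof -
  obtain d \<sigma> where irr: "irreducible_rep G d \<sigma>" and ch: "\<chi> = character_of G \<sigma>" and dg: "deg G \<chi> = of_nat d"
    and dcd: "d \<in> cd G" and d: "d > 0" using deg_irr[OF chi] by metis
  have rs: "is_rep G d \<sigma>" using irr unfolding irreducible_rep_def by auto
  have sc: "\<And>g. g \<in> carrier G \<Longrightarrow> \<sigma> g \<in> carrier_mat d d" using rep_carrier[OF rs] .
  define \<omega> where "\<omega> z = \<chi> z / of_nat d" for z
  have chw: "\<chi> z = of_nat d * \<omega> z" for z unfolding \<omega>_def using d by simp
  have scal: "\<sigma> z = \<omega> z \<cdot>\<^sub>m 1\<^sub>m d" if z: "z \<in> ZZ" for z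
  proof -
    have zc: "z \<in> carrier G" using z by (rule ZZ_carrier)
    have "\<sigma> z * \<sigma> x = \<sigma> x * \<sigma> z" if x: "x \<in> carrier G" for x
      using rep_mult[OF rs zc x] rep_mult[OF rs x zc] z x unfolding ZZ_iff by metis
    then obtain c where c: "\<sigma> z = c \<cdot>\<^sub>m 1\<^sub>m d" using schur_scalar[OF irr sc[OF zc]] by metis
    have "\<chi> z = c * of_nat d" unfolding ch using zc c by (simp add: character_of_in mat_tr_smult[of _ d])
    hence "c = \<omega> z" unfolding \<omega>_def using d by simp
    thus ?thesis using c by simp
  qed
  have mult: "\<omega> (z \<otimes> z') = \<omega> z * \<omega> z'" if z: "z \<in> ZZ" "z' \<in> ZZ" for z z'
  proof -
    have zc: "z \<in> carrier G" "z' \<in> carrier G" using z ZZ_carrier by auto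
    have "\<sigma> (z \<otimes> z') = (\<omega> z * \<omega> z') \<cdot>\<^sub>m 1\<^sub>m d"
      using rep_mult[OF rs zc] scal[OF z(1)] scal[OF z(2)] by (auto simp: mult_smult_distrib)
    moreover have "\<sigma> (z \<otimes> z') = \<omega> (z \<otimes> z') \<cdot>\<^sub>m 1\<^sub>m d" using scal[OF ZZ_mult[OF z]] .
    ultimately have "(\<omega> z * \<omega> z') \<cdot>\<^sub>m 1\<^sub>m d = \<omega> (z \<otimes> z') \<cdot>\<^sub>m 1\<^sub>m d" by simp
    hence "((\<omega> z * \<omega> z') \<cdot>\<^sub>m 1\<^sub>m d) $$ (0,0) = (\<omega> (z \<otimes> z') \<cdot>\<^sub>m 1\<^sub>m d) $$ (0,0)" by simp
    thus ?thesis using d by simp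
  qed
  have norm: "\<omega> z * cnj (\<omega> z) = 1" if z: "z \<in> ZZ" for z
  proof -
    have zc: "z \<in> carrier G" using z ZZ_carrier by auto
    have "\<omega> (inv z) = cnj (\<omega> z)" unfolding \<omega>_def using char_inv[OF fin chi zc] by simp
    moreover have "\<omega> z * \<omega> (inv z) = \<omega> \<one>" using mult[OF z ZZ_inv[OF z]] zc by simp
    moreover have "\<omega> \<one> = 1" unfolding \<omega>_def using dg d unfolding deg_def by simp
    ultimately show ?thesis by simp
  qed
  show ?thesis using that[OF dg d dcd chw mult norm] .
qed

lemma Y_vals:
  assumes fin: "finite (carrier G)" and c1: "\<chi>1 \<in> Irr G" and c2: "\<chi>2 \<in> Irr G"
  shows "(\<Sum>z\<in>ZZ. \<chi>1 z * cnj (\<chi>2 z)) = 0 \<or>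
         (\<Sum>z\<in>ZZ. \<chi>1 z * cnj (\<chi>2 z)) = deg G \<chi>1 * deg G \<chi>2 * of_nat (card ZZ)"
proof -
  obtain d1 \<omega>1 where d1: "deg G \<chi>1 = of_nat d1" and ch1: "\<And>z. z \<in> ZZ \<Longrightarrow> \<chi>1 z = of_nat d1 * \<omega>1 z"
    and m1: "\<And>z z'. z \<in> ZZ \<Longrightarrow> z' \<in> ZZ \<Longrightarrow> \<omega>1 (z \<otimes> z') = \<omega>1 z * \<omega>1 z'"
    using central_char[OF fin c1] by metis
  obtain d2 \<omega>2 where d2: "deg G \<chi>2 = of_nat d2" and ch2: "\<And>z. z \<in> ZZ \<Longrightarrow> \<chi>2 z = of_nat d2 * \<omega>2 z"
    and m2: "\<And>z z'. z \<in> ZZ \<Longrightarrow> z' \<in> ZZ \<Longrightarrow> \<omega>2 (z \<otimes> z') = \<omega>2 z * \<omega>2 z'"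
    using central_char[OF fin c2] by metis
  define \<psi> where "\<psi> z = \<omega>1 z * cnj (\<omega>2 z)" for z
  have "(\<Sum>z\<in>ZZ. \<chi>1 z * cnj (\<chi>2 z)) = (\<Sum>z\<in>ZZ. of_nat d1 * of_nat d2 * \<psi> z)"
    using ch1 ch2 unfolding \<psi>_def by (intro sum.cong) (auto simp: mult_ac)
  also have "\<dots> = of_nat d1 * of_nat d2 * (\<Sum>z\<in>ZZ. \<psi> z)" by (simp add: sum_distrib_left)
  finally have e: "(\<Sum>z\<in>ZZ. \<chi>1 z * cnj (\<chi>2 z)) = of_nat d1 * of_nat d2 * (\<Sum>z\<in>ZZ. \<psi> z)" .
  show ?thesis
  proof (cases "\<forall>z\<in>ZZ. \<psi> z = 1")
    case True
    hence "(\<Sum>z\<in>ZZ. \<psi> z) = of_nat (card ZZ)" by simp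
    thus ?thesis using e d1 d2 by simp
  next
    case False
    then obtain z0 where z0: "z0 \<in> ZZ" "\<psi> z0 \<noteq> 1" by auto
    have "(\<Sum>z\<in>ZZ. \<psi> z) = 0"
      by (rule sum_twist_zero[OF ZZ_bij[OF z0(1)], of \<psi> "\<psi> z0"]) (use z0(2) in \<open>auto simp: \<psi>_def m1 m2 z0(1)\<close>)
    thus ?thesis using e by simp
  qed
qed

lemma Y_diag:
  assumes fin: "finite (carrier G)" and c: "\<chi> \<in> Irr G"
  shows "(\<Sum>z\<in>ZZ. \<chi> z * cnj (\<chi> z)) = deg G \<chi> * deg G \<chi> * of_nat (card ZZ)"
proof -
  obtain d \<omega> where dg: "deg G \<chi> = of_nat d" and ch: "\<And>z. z \<in> ZZ \<Longrightarrow> \<chi> z = of_nat d * \<omega> z"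
    and nm: "\<And>z. z \<in> ZZ \<Longrightarrow> \<omega> z * cnj (\<omega> z) = 1"
    using central_char[OF fin c] by metis
  have "(\<Sum>z\<in>ZZ. \<chi> z * cnj (\<chi> z)) = (\<Sum>z\<in>ZZ. of_nat d * of_nat d)"
  proof (rule sum.cong[OF refl])
    fix z assume z: "z \<in> ZZ"
    have "\<chi> z * cnj (\<chi> z) = of_nat d * of_nat d * (\<omega> z * cnj (\<omega> z))" using ch[OF z] by simp
    thus "\<chi> z * cnj (\<chi> z) = of_nat d * of_nat d" using nm[OF z] by simp
  qed
  thus ?thesis using dg by simp
qed

lemma cls_partition:
  assumes h: "h \<in> carrier G"
  shows "{x \<in> carrier G. conj_class G x = conj_class G h} = conj_class G h"
proof (intro equalityI subsetI)
  fix x assume "x \<in> {x \<in> carrier G. conj_class G x = conj_class G h}"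
  thus "x \<in> conj_class G h" using cc_self by auto
next
  fix x assume x: "x \<in> conj_class G h"
  thus "x \<in> {x \<in> carrier G. conj_class G x = conj_class G h}" using cc_eq[OF h x] cc_sub[OF h] by auto
qed

lemma sum_Conj:
  fixes H :: "'a set \<Rightarrow> 'b :: comm_semiring_1"
  assumes fin: "finite (carrier G)"
  shows "(\<Sum>g\<in>carrier G. H (conj_class G g)) = (\<Sum>C\<in>Conj G. of_nat (card C) * H C)"
proof -
  have "(\<Sum>g\<in>carrier G. H (conj_class G g)) =
      (\<Sum>C\<in>conj_class G ` carrier G. \<Sum>x\<in>{x \<in> carrier G. conj_class G x = C}. H (conj_class G x))"
    by (rule sum.image_gen[OF fin])
  also have "\<dots> = (\<Sum>C\<in>Conj G. of_nat (card C) * H C)"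
    unfolding Conj_def
  proof (rule sum.cong[OF refl])
    fix C assume "C \<in> conj_class G ` carrier G"
    then obtain h where h: "h \<in> carrier G" "C = conj_class G h" by auto
    have "(\<Sum>x\<in>{x \<in> carrier G. conj_class G x = C}. H (conj_class G x)) = (\<Sum>x\<in>{x \<in> carrier G. conj_class G x = C}. H C)"
      by (rule sum.cong) auto
    also have "\<dots> = of_nat (card C) * H C" using cls_partition[OF h(1)] h(2) by simp
    finally show "(\<Sum>x\<in>{x \<in> carrier G. conj_class G x = C}. H (conj_class G x)) = of_nat (card C) * H C" .
  qed
  finally show ?thesis .
qed

lemma cval_cls:
  assumes "\<chi> \<in> Irr G" "h \<in> carrier G"
  shows "cval \<chi> (conj_class G h) = \<chi> h"
proof -
  have "(SOME g. g \<in> conj_class G h) \<in> conj_class G h" using cc_self[OF assms(2)] by (rule someI)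
  thus ?thesis unfolding cval_def using char_cc[OF assms] by simp
qed

end

locale amz = grp G for G :: "'a monoid" (structure) +
  fixes m s :: nat
  assumes fin: "finite (carrier G)" and cdG: "cd G = {1, m}" and ccG: "cc G = {1, s}"
begin

abbreviation "n \<equiv> card (carrier G)"

lemma n0: "n > 0" using fin card_gt_0_iff by auto

lemma m_pos: "m \<ge> 1"
proof -
  have "m \<in> cd G" using cdG by simp
  then obtain \<sigma> where "irreducible_rep G m \<sigma>" unfolding cd_def by auto
  thus ?thesis unfolding irreducible_rep_def by auto
qed

lemma s_pos: "s \<ge> 1"
proof -
  have "s \<in> cc G" using ccG by simp
  then obtain g where g: "g \<in> carrier G" "s = card (conj_class G g)" unfolding cc_def Conj_def by auto
  have "card (conj_class G g) > 0" using cc_finite[OF fin g(1)] cc_self[OF g(1)] card_gt_0_iff by auto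
  thus ?thesis using g by simp
qed

lemma deg_vals: "\<chi> \<in> Irr G \<Longrightarrow> deg G \<chi> = 1 \<or> deg G \<chi> = of_nat m"
  using deg_irr[of \<chi>] cdG by (metis insert_iff of_nat_1 singletonD)

definition dr :: "('a \<Rightarrow> complex) \<Rightarrow> real" where
  "dr \<chi> = (if deg G \<chi> = 1 then 1 else real m)"

lemma deg_dr: "\<chi> \<in> Irr G \<Longrightarrow> deg G \<chi> = of_real (dr \<chi>)"
  unfolding dr_def using deg_vals by auto

lemma dr_nonneg: "dr \<chi> \<ge> 0" unfolding dr_def by auto

lemma cls_card: "g \<in> carrier G \<Longrightarrow> card (conj_class G g) = (if g \<in> ZZ then 1 else s)"
proof -
  assume g: "g \<in> carrier G"
  have "card (conj_class G g) \<in> cc G" unfolding cc_def Conj_def using g by auto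
  thus ?thesis using ccG g unfolding ZZ_def by auto
qed

lemma cls_one: "conj_class G \<one> = {\<one>}"
proof -
  have "card (conj_class G \<one>) = 1" using ZZ_one unfolding ZZ_def by auto
  thus ?thesis using cc_self[of \<one>] by (metis card_1_singletonE one_closed singletonD)
qed

lemma sum_deg_col:
  assumes z: "z \<in> carrier G"
  shows "(\<Sum>\<chi>\<in>Irr G. \<chi> z * cnj (deg G \<chi>)) = (if z = \<one> then of_nat n else 0)"
proof -
  have "(\<Sum>\<chi>\<in>Irr G. \<chi> z * cnj (deg G \<chi>)) = (\<Sum>\<chi>\<in>Irr G. \<chi> z * cnj (\<chi> \<one>))" unfolding deg_def ..
  also have "\<dots> = (if z \<in> conj_class G \<one> then of_nat n / of_nat (card (conj_class G \<one>)) else 0)"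
    by (rule col_orth[OF fin z one_closed])
  finally show ?thesis unfolding cls_one by simp
qed

lemma sum_dr2: "(\<Sum>\<chi>\<in>Irr G. (dr \<chi>)^2) = real n"
proof -
  have "(\<Sum>\<chi>\<in>Irr G. complex_of_real ((dr \<chi>)^2)) = (\<Sum>\<chi>\<in>Irr G. \<chi> \<one> * cnj (deg G \<chi>))"
  proof (rule sum.cong[OF refl])
    fix \<chi> assume c: "\<chi> \<in> Irr G"
    have "\<chi> \<one> = complex_of_real (dr \<chi>)" using deg_dr[OF c] unfolding deg_def .
    thus "complex_of_real ((dr \<chi>)^2) = \<chi> \<one> * cnj (deg G \<chi>)" using deg_dr[OF c] by (simp add: power2_eq_square)
  qed
  also have "\<dots> = of_nat n" using sum_deg_col[OF one_closed] by simp
  finally have "complex_of_real (\<Sum>\<chi>\<in>Irr G. (dr \<chi>)^2) = complex_of_real (real n)"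
    by (simp only: of_real_sum of_real_of_nat_eq)
  thus ?thesis by (simp only: of_real_eq_iff)
qed

definition Yc where "Yc \<chi> \<chi>' = (\<Sum>z\<in>ZZ. \<chi> z * cnj (\<chi>' z))"
definition yv where "yv \<chi> \<chi>' = Re (Yc \<chi> \<chi>')"

lemma Yc_real:
  assumes "\<chi> \<in> Irr G" "\<chi>' \<in> Irr G"
  shows "Yc \<chi> \<chi>' = of_real (yv \<chi> \<chi>')" "yv \<chi> \<chi>' \<ge> 0"
proof -
  have "Yc \<chi> \<chi>' = 0 \<or> Yc \<chi> \<chi>' = of_real (dr \<chi> * dr \<chi>' * real (card ZZ))"
    using Y_vals[OF fin assms] unfolding Yc_def deg_dr[OF assms(1)] deg_dr[OF assms(2)] by simp
  thus "Yc \<chi> \<chi>' = of_real (yv \<chi> \<chi>')" "yv \<chi> \<chi>' \<ge> 0" unfolding yv_def using dr_nonneg[of \<chi>] dr_nonneg[of \<chi>'] by auto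
qed

lemma yv_diag: "\<chi> \<in> Irr G \<Longrightarrow> yv \<chi> \<chi> = (dr \<chi>)^2 * real (card ZZ)"
  unfolding yv_def Yc_def using Y_diag[OF fin] deg_dr by (simp add: power2_eq_square)

lemma yv_diag_le: assumes c: "\<chi> \<in> Irr G" shows "yv \<chi> \<chi> \<le> real n"
proof -
  have "yv \<chi> \<chi> = (\<Sum>z\<in>ZZ. (cmod (\<chi> z))^2)"
    unfolding yv_def Yc_def by (simp add: Re_sum complex_mult_cnj cmod_power2)
  also have "\<dots> \<le> (\<Sum>z\<in>carrier G. (cmod (\<chi> z))^2)"
    using fin ZZ_carrier by (intro sum_mono2) auto
  also have "\<dots> = Re (\<Sum>g\<in>carrier G. \<chi> g * cnj (\<chi> g))" by (simp add: Re_sum complex_mult_cnj cmod_power2)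
  also have "\<dots> = real n" using row_orth[OF fin c c] by simp
  finally show ?thesis .
qed

lemma sum_dy: assumes c: "\<chi> \<in> Irr G" shows "(\<Sum>\<chi>'\<in>Irr G. dr \<chi>' * yv \<chi> \<chi>') = dr \<chi> * real n"
proof -
  have "(\<Sum>\<chi>'\<in>Irr G. deg G \<chi>' * Yc \<chi> \<chi>') = (\<Sum>z\<in>ZZ. \<chi> z * cnj (\<Sum>\<chi>'\<in>Irr G. \<chi>' z * cnj (deg G \<chi>')))"
    unfolding Yc_def by (simp add: sum_distrib_left sum_distrib_right sum.swap[of _ ZZ] mult_ac)
  also have "\<dots> = (\<Sum>z\<in>ZZ. \<chi> z * (if z = \<one> then of_nat n else 0))"
    using sum_deg_col ZZ_carrier by (intro sum.cong) auto
  also have "\<dots> = \<chi> \<one> * of_nat n" using ZZ_one ZZ_finite[OF fin]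
    by (simp add: if_distrib[of "\<lambda>x. \<chi> _ * x"] sum.delta' cong: if_cong)
  finally have "(\<Sum>\<chi>'\<in>Irr G. deg G \<chi>' * Yc \<chi> \<chi>') = deg G \<chi> * of_nat n" unfolding deg_def .
  moreover have "(\<Sum>\<chi>'\<in>Irr G. deg G \<chi>' * Yc \<chi> \<chi>') = (\<Sum>\<chi>'\<in>Irr G. complex_of_real (dr \<chi>' * yv \<chi> \<chi>'))"
    using Yc_real(1)[OF c] deg_dr by (intro sum.cong) auto
  ultimately have "complex_of_real (\<Sum>\<chi>'\<in>Irr G. dr \<chi>' * yv \<chi> \<chi>') = complex_of_real (dr \<chi> * real n)"
    using deg_dr[OF c] by (simp only: of_real_sum of_real_mult of_real_of_nat_eq)
  thus ?thesis by (simp only: of_real_eq_iff)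
qed

end

context amz begin

definition sv where "sv \<chi> \<chi>' = (if \<chi> = \<chi>' then real s * real n else 0) + (1 - real s) * yv \<chi> \<chi>'"

lemma S_eq:
  assumes c: "\<chi> \<in> Irr G" and c': "\<chi>' \<in> Irr G"
  shows "(\<Sum>C\<in>Conj G. of_nat (card C ^ 2) * cval \<chi> C * cnj (cval \<chi>' C)) = complex_of_real (sv \<chi> \<chi>')"
proof -
  let ?H = "\<lambda>C. of_nat (card C) * cval \<chi> C * cnj (cval \<chi>' C) :: complex"
  have "(\<Sum>C\<in>Conj G. of_nat (card C ^ 2) * cval \<chi> C * cnj (cval \<chi>' C)) = (\<Sum>C\<in>Conj G. of_nat (card C) * ?H C)"
    by (intro sum.cong) (auto simp: power2_eq_square mult_ac)
  also have "\<dots> = (\<Sum>g\<in>carrier G. ?H (conj_class G g))" by (rule sum_Conj[OF fin, symmetric])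
  also have "\<dots> = (\<Sum>g\<in>carrier G. of_nat s * (\<chi> g * cnj (\<chi>' g)) + (if g \<in> ZZ then (1 - of_nat s) * (\<chi> g * cnj (\<chi>' g)) else 0))"
  proof (rule sum.cong[OF refl])
    fix g assume g: "g \<in> carrier G"
    show "?H (conj_class G g) = of_nat s * (\<chi> g * cnj (\<chi>' g)) + (if g \<in> ZZ then (1 - of_nat s) * (\<chi> g * cnj (\<chi>' g)) else 0)"
      using cls_card[OF g] cval_cls[OF c g] cval_cls[OF c' g] by (auto simp: algebra_simps)
  qed
  also have "\<dots> = of_nat s * (\<Sum>g\<in>carrier G. \<chi> g * cnj (\<chi>' g)) + (\<Sum>g\<in>carrier G \<inter> ZZ. (1 - of_nat s) * (\<chi> g * cnj (\<chi>' g)))"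
    using fin by (simp add: sum.distrib sum_distrib_left sum.inter_restrict)
  also have "carrier G \<inter> ZZ = ZZ" using ZZ_carrier by auto
  also have "(\<Sum>g\<in>ZZ. (1 - of_nat s) * (\<chi> g * cnj (\<chi>' g))) = (1 - of_nat s) * Yc \<chi> \<chi>'"
    unfolding Yc_def by (simp add: sum_distrib_left)
  finally show ?thesis unfolding row_orth[OF fin c c'] Yc_real(1)[OF c c'] sv_def by simp
qed

lemma sv_diag: assumes c: "\<chi> \<in> Irr G"
  shows "sv \<chi> \<chi> = real s * real n - (real s - 1) * (dr \<chi>)^2 * real (card ZZ)" "sv \<chi> \<chi> \<ge> 0"
proof -
  show e: "sv \<chi> \<chi> = real s * real n - (real s - 1) * (dr \<chi>)^2 * real (card ZZ)"
    unfolding sv_def yv_diag[OF c] by (simp add: algebra_simps)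
  have "yv \<chi> \<chi> \<le> real n" by (rule yv_diag_le[OF c])
  hence "(real s - 1) * ((dr \<chi>)^2 * real (card ZZ)) \<le> (real s - 1) * real n"
    using s_pos yv_diag[OF c] by (intro mult_left_mono) auto
  thus "sv \<chi> \<chi> \<ge> 0" unfolding e using s_pos by (simp add: algebra_simps)
qed

lemma sv_off: assumes c: "\<chi> \<in> Irr G" and c': "\<chi>' \<in> Irr G" and ne: "\<chi>' \<noteq> \<chi>"
  shows "\<bar>sv \<chi> \<chi>'\<bar> = (real s - 1) * yv \<chi> \<chi>'"
proof -
  have "sv \<chi> \<chi>' = - ((real s - 1) * yv \<chi> \<chi>')" unfolding sv_def using ne by (simp add: algebra_simps)
  moreover have "(real s - 1) * yv \<chi> \<chi>' \<ge> 0" using s_pos Yc_real(2)[OF c c'] by simp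
  ultimately show ?thesis by simp
qed

lemma row_sum_A:
  assumes c: "\<chi> \<in> Irr G"
  shows "(\<Sum>\<chi>'\<in>Irr G. dr \<chi> * dr \<chi>' * \<bar>sv \<chi> \<chi>'\<bar>) =
    (dr \<chi>)^2 * ((2 * real s - 1) * real n - 2 * (real s - 1) * real (card ZZ) * (dr \<chi>)^2)"
proof -
  have finI: "finite (Irr G)" by (rule Irr_finite[OF fin])
  let ?k = "real (card ZZ)"
  have "(\<Sum>\<chi>'\<in>Irr G. dr \<chi>' * \<bar>sv \<chi> \<chi>'\<bar>) = dr \<chi> * \<bar>sv \<chi> \<chi>\<bar> + (\<Sum>\<chi>'\<in>Irr G - {\<chi>}. dr \<chi>' * \<bar>sv \<chi> \<chi>'\<bar>)"
    using sum.remove[OF finI c] by simp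
  also have "(\<Sum>\<chi>'\<in>Irr G - {\<chi>}. dr \<chi>' * \<bar>sv \<chi> \<chi>'\<bar>) = (real s - 1) * (\<Sum>\<chi>'\<in>Irr G - {\<chi>}. dr \<chi>' * yv \<chi> \<chi>')"
    using sv_off[OF c] by (simp add: sum_distrib_left mult_ac)
  also have "(\<Sum>\<chi>'\<in>Irr G - {\<chi>}. dr \<chi>' * yv \<chi> \<chi>') = dr \<chi> * real n - dr \<chi> * yv \<chi> \<chi>"
    using sum.remove[OF finI c, of "\<lambda>\<chi>'. dr \<chi>' * yv \<chi> \<chi>'"] sum_dy[OF c] by simp
  also have "\<bar>sv \<chi> \<chi>\<bar> = sv \<chi> \<chi>" using sv_diag(2)[OF c] by simp
  finally have e: "(\<Sum>\<chi>'\<in>Irr G. dr \<chi>' * \<bar>sv \<chi> \<chi>'\<bar>) =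
      dr \<chi> * (real s * real n - (real s - 1) * (dr \<chi>)^2 * ?k) + (real s - 1) * (dr \<chi> * real n - dr \<chi> * ((dr \<chi>)^2 * ?k))"
    unfolding sv_diag(1)[OF c] yv_diag[OF c] .
  have "(\<Sum>\<chi>'\<in>Irr G. dr \<chi> * dr \<chi>' * \<bar>sv \<chi> \<chi>'\<bar>) = dr \<chi> * (\<Sum>\<chi>'\<in>Irr G. dr \<chi>' * \<bar>sv \<chi> \<chi>'\<bar>)"
    by (simp add: sum_distrib_left mult_ac)
  also have "\<dots> = (dr \<chi>)^2 * ((2 * real s - 1) * real n - 2 * (real s - 1) * ?k * (dr \<chi>)^2)"
    unfolding e by (simp add: algebra_simps power2_eq_square)
  finally show ?thesis .
qed

lemma AMZA_val:
  "AMZA G * (real n)^2 = (2 * real s - 1) * (real n)^2 - 2 * (real s - 1) * real (card ZZ) * (\<Sum>\<chi>\<in>Irr G. (dr \<chi>)^4)"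
proof -
  have "(\<Sum>\<chi>\<in>Irr G. \<Sum>\<chi>'\<in>Irr G. cmod (deg G \<chi> * deg G \<chi>') *
        cmod (\<Sum>C\<in>Conj G. of_nat (card C ^ 2) * cval \<chi> C * cnj (cval \<chi>' C)))
      = (\<Sum>\<chi>\<in>Irr G. \<Sum>\<chi>'\<in>Irr G. dr \<chi> * dr \<chi>' * \<bar>sv \<chi> \<chi>'\<bar>)"
  proof (intro sum.cong refl)
    fix \<chi> \<chi>' assume c: "\<chi> \<in> Irr G" and c': "\<chi>' \<in> Irr G"
    show "cmod (deg G \<chi> * deg G \<chi>') * cmod (\<Sum>C\<in>Conj G. of_nat (card C ^ 2) * cval \<chi> C * cnj (cval \<chi>' C))
        = dr \<chi> * dr \<chi>' * \<bar>sv \<chi> \<chi>'\<bar>"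
      unfolding S_eq[OF c c'] deg_dr[OF c] deg_dr[OF c'] using dr_nonneg[of \<chi>] dr_nonneg[of \<chi>']
      by (simp add: norm_mult)
  qed
  also have "\<dots> = (\<Sum>\<chi>\<in>Irr G. (dr \<chi>)^2 * ((2 * real s - 1) * real n - 2 * (real s - 1) * real (card ZZ) * (dr \<chi>)^2))"
    using row_sum_A by (intro sum.cong) auto
  also have "\<dots> = (2 * real s - 1) * real n * (\<Sum>\<chi>\<in>Irr G. (dr \<chi>)^2) - 2 * (real s - 1) * real (card ZZ) * (\<Sum>\<chi>\<in>Irr G. (dr \<chi>)^4)"
    by (simp add: algebra_simps sum_distrib_left sum_subtractf power2_eq_square power4_eq_xxxx)
  also have "\<dots> = (2 * real s - 1) * (real n)^2 - 2 * (real s - 1) * real (card ZZ) * (\<Sum>\<chi>\<in>Irr G. (dr \<chi>)^4)"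
    unfolding sum_dr2 by (simp add: power2_eq_square)
  finally show ?thesis unfolding AMZA_def using n0 by (simp add: field_simps)
qed

end

context amz begin

abbreviation "a \<equiv> card Lin"

definition Lc where "Lc g h = (\<Sum>l\<in>Lin. l g * cnj (l h))"
definition lr where "lr g h = Re (Lc g h)"

lemma Lc_val:
  assumes g: "g \<in> carrier G" and h: "h \<in> carrier G"
  shows "Lc g h = (if \<forall>l\<in>Lin. l (g \<otimes> inv h) = 1 then of_nat a else 0)"
proof -
  have "Lc g h = (\<Sum>l\<in>Lin. l (g \<otimes> inv h))"
    unfolding Lc_def
  proof (rule sum.cong[OF refl])
    fix l assume l: "l \<in> Lin"
    show "l g * cnj (l h) = l (g \<otimes> inv h)"
      using Lin_mult[OF l g inv_closed[OF h]] char_inv[OF fin Lin_Irr[OF l] h] by simp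
  qed
  also have "\<dots> = (if \<forall>l\<in>Lin. l (g \<otimes> inv h) = 1 then of_nat a else 0)"
    using Lin_sum[OF fin] g h by simp
  finally show ?thesis .
qed

lemma Lc_real: "g \<in> carrier G \<Longrightarrow> h \<in> carrier G \<Longrightarrow> Lc g h = of_real (lr g h) \<and> lr g h \<ge> 0"
  unfolding lr_def using Lc_val by auto

lemma lr_same: assumes g: "g \<in> carrier G" and h: "h \<in> conj_class G g" shows "lr g h = real a"
proof -
  have "Lc g h = (\<Sum>l\<in>Lin. 1)"
    unfolding Lc_def
  proof (rule sum.cong[OF refl])
    fix l assume l: "l \<in> Lin"
    have "l h = l g" using char_cc[OF Lin_Irr[OF l] g h] .
    thus "l g * cnj (l h) = 1" using Lin_norm[OF fin l g] by simp
  qed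
  thus ?thesis unfolding lr_def by simp
qed

lemma lr_rowsum: assumes g: "g \<in> carrier G" shows "(\<Sum>h\<in>carrier G. lr g h) = real n"
proof -
  have "(\<Sum>h\<in>carrier G. Lc g h) = (\<Sum>l\<in>Lin. l g * cnj (\<Sum>h\<in>carrier G. l h))"
    unfolding Lc_def by (simp add: sum_distrib_left sum.swap[of _ "carrier G"])
  also have "\<dots> = (\<Sum>l\<in>Lin. if l = triv then l g * of_nat n else 0)"
    using sum_char[OF fin] Lin_Irr by (intro sum.cong) auto
  also have "\<dots> = triv g * of_nat n" using triv_Lin Lin_finite[OF fin] by (simp add: sum.delta')
  also have "\<dots> = of_nat n" using triv_val[OF g] by simp
  finally have "(\<Sum>h\<in>carrier G. Lc g h) = of_nat n" .
  moreover have "(\<Sum>h\<in>carrier G. Lc g h) = of_real (\<Sum>h\<in>carrier G. lr g h)"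
    using Lc_real[OF g] by (simp add: of_real_sum)
  ultimately have "complex_of_real (\<Sum>h\<in>carrier G. lr g h) = complex_of_real (real n)" by simp
  thus ?thesis by (simp only: of_real_eq_iff)
qed

lemma a_cs: assumes g: "g \<in> carrier G" shows "real a * real (card (conj_class G g)) \<le> real n"
proof -
  have "real a * real (card (conj_class G g)) = (\<Sum>h\<in>conj_class G g. lr g h)"
    using lr_same[OF g] by simp
  also have "\<dots> \<le> (\<Sum>h\<in>carrier G. lr g h)"
    using fin cc_sub[OF g] Lc_real[OF g] by (intro sum_mono2) auto
  also have "\<dots> = real n" by (rule lr_rowsum[OF g])
  finally show ?thesis .
qed

lemma Lin_iff: "\<chi> \<in> Irr G \<Longrightarrow> \<chi> \<in> Lin \<longleftrightarrow> deg G \<chi> = 1" unfolding Lin_def by auto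

definition tr where "tr g h = real m ^ 2 * (if h \<in> conj_class G g then real n / real (card (conj_class G g)) else 0)
    - (real m ^ 2 - 1) * lr g h"

lemma Tc_eq:
  assumes g: "g \<in> carrier G" and h: "h \<in> carrier G"
  shows "(\<Sum>\<chi>\<in>Irr G. (deg G \<chi>)\<^sup>2 * cval \<chi> (conj_class G g) * cnj (cval \<chi> (conj_class G h))) = of_real (tr g h)"
proof -
  have finI: "finite (Irr G)" by (rule Irr_finite[OF fin])
  let ?f = "\<lambda>\<chi>. \<chi> g * cnj (\<chi> h)"
  have "(\<Sum>\<chi>\<in>Irr G. (deg G \<chi>)\<^sup>2 * cval \<chi> (conj_class G g) * cnj (cval \<chi> (conj_class G h)))
      = (\<Sum>\<chi>\<in>Irr G. of_nat m ^ 2 * ?f \<chi> - (if \<chi> \<in> Lin then (of_nat m ^ 2 - 1) * ?f \<chi> else 0))"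
  proof (rule sum.cong[OF refl])
    fix \<chi> assume c: "\<chi> \<in> Irr G"
    show "(deg G \<chi>)\<^sup>2 * cval \<chi> (conj_class G g) * cnj (cval \<chi> (conj_class G h))
        = of_nat m ^ 2 * ?f \<chi> - (if \<chi> \<in> Lin then (of_nat m ^ 2 - 1) * ?f \<chi> else 0)"
      using deg_vals[OF c] Lin_iff[OF c] cval_cls[OF c g] cval_cls[OF c h]
      by (auto simp: algebra_simps)
  qed
  also have "\<dots> = of_nat m ^ 2 * (\<Sum>\<chi>\<in>Irr G. ?f \<chi>) - (\<Sum>\<chi>\<in>Irr G \<inter> Lin. (of_nat m ^ 2 - 1) * ?f \<chi>)"
    using finI by (simp add: sum_subtractf sum_distrib_left sum.inter_restrict)
  also have "Irr G \<inter> Lin = Lin" unfolding Lin_def by auto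
  also have "(\<Sum>\<chi>\<in>Lin. (of_nat m ^ 2 - 1) * ?f \<chi>) = (of_nat m ^ 2 - 1) * Lc g h"
    unfolding Lc_def by (simp add: sum_distrib_left)
  also have "(\<Sum>\<chi>\<in>Irr G. ?f \<chi>) = (if g \<in> conj_class G h then of_nat n / of_nat (card (conj_class G h)) else 0)"
    by (rule col_orth[OF fin g h])
  also have "\<dots> = (if h \<in> conj_class G g then of_nat n / of_nat (card (conj_class G g)) else 0)"
    using cc_sym[OF g h] cc_eq[OF g, of h] by auto
  finally show ?thesis unfolding tr_def using Lc_real[OF g h] by simp
qed

lemma tr_rowsum:
  assumes g: "g \<in> carrier G"
  shows "(\<Sum>h\<in>carrier G. \<bar>tr g h\<bar>) = (2 * real m ^ 2 - 1) * real n - 2 * (real m ^ 2 - 1) * real a * real (card (conj_class G g))"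
proof -
  let ?C = "conj_class G g" and ?c = "real (card (conj_class G g))"
  have c0: "?c > 0" using cc_finite[OF fin g] cc_self[OF g] card_gt_0_iff by auto
  have m1: "real m ^ 2 \<ge> 1" using m_pos by simp
  have sub: "?C \<subseteq> carrier G" by (rule cc_sub[OF g])
  have acs: "real a * ?c \<le> real n" by (rule a_cs[OF g])
  have on: "\<bar>tr g h\<bar> = real m ^ 2 * real n / ?c - (real m ^ 2 - 1) * real a" if h: "h \<in> ?C" for h
  proof -
    have e: "tr g h = real m ^ 2 * real n / ?c - (real m ^ 2 - 1) * real a"
      unfolding tr_def lr_same[OF g h] using h by simp
    have "real a \<le> real n / ?c" using acs c0 by (simp add: field_simps)
    hence "(real m ^ 2 - 1) * real a \<le> (real m ^ 2 - 1) * (real n / ?c)" using m1 by (intro mult_left_mono) auto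
    also have "\<dots> \<le> real m ^ 2 * (real n / ?c)" by (rule mult_right_mono) auto
    finally show ?thesis unfolding e by simp
  qed
  have off: "\<bar>tr g h\<bar> = (real m ^ 2 - 1) * lr g h" if h: "h \<in> carrier G - ?C" for h
  proof -
    have "tr g h = - ((real m ^ 2 - 1) * lr g h)" unfolding tr_def using h by simp
    moreover have "(real m ^ 2 - 1) * lr g h \<ge> 0" using m1 Lc_real[OF g] h by simp
    ultimately show ?thesis by simp
  qed
  have "(\<Sum>h\<in>carrier G. \<bar>tr g h\<bar>) = (\<Sum>h\<in>?C. \<bar>tr g h\<bar>) + (\<Sum>h\<in>carrier G - ?C. \<bar>tr g h\<bar>)"
    using sum.subset_diff[OF sub fin, of "\<lambda>h. \<bar>tr g h\<bar>"] by (simp add: add.commute)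
  also have "(\<Sum>h\<in>?C. \<bar>tr g h\<bar>) = ?c * (real m ^ 2 * real n / ?c - (real m ^ 2 - 1) * real a)"
    using on by simp
  also have "(\<Sum>h\<in>carrier G - ?C. \<bar>tr g h\<bar>) = (real m ^ 2 - 1) * (\<Sum>h\<in>carrier G - ?C. lr g h)"
    using off by (simp add: sum_distrib_left)
  also have "(\<Sum>h\<in>carrier G - ?C. lr g h) = real n - ?c * real a"
    using sum.subset_diff[OF sub fin, of "lr g"] lr_rowsum[OF g] lr_same[OF g] by simp
  finally show ?thesis using c0 by (simp add: algebra_simps)
qed

lemma AMZL_val:
  "AMZL G * (real n)^2 = (2 * real m ^ 2 - 1) * (real n)^2 - 2 * (real m ^ 2 - 1) * real a * (\<Sum>g\<in>carrier G. real (card (conj_class G g)))"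
proof -
  define X where "X C C' = cmod (\<Sum>\<chi>\<in>Irr G. (deg G \<chi>)\<^sup>2 * cval \<chi> C * cnj (cval \<chi> C'))" for C C'
  have "(\<Sum>C\<in>Conj G. \<Sum>C'\<in>Conj G. real (card C) * real (card C') * X C C')
      = (\<Sum>C\<in>Conj G. real (card C) * (\<Sum>C'\<in>Conj G. real (card C') * X C C'))"
    by (simp add: sum_distrib_left mult_ac)
  also have "\<dots> = (\<Sum>C\<in>Conj G. real (card C) * (\<Sum>h\<in>carrier G. X C (conj_class G h)))"
    using sum_Conj[OF fin, of "\<lambda>C'. X _ C'"] by simp
  also have "\<dots> = (\<Sum>h\<in>carrier G. \<Sum>C\<in>Conj G. real (card C) * X C (conj_class G h))"
    by (simp add: sum_distrib_left sum.swap[of _ "Conj G"])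
  also have "\<dots> = (\<Sum>h\<in>carrier G. \<Sum>g\<in>carrier G. X (conj_class G g) (conj_class G h))"
    using sum_Conj[OF fin, of "\<lambda>C. X C (conj_class G _)"] by simp
  also have "\<dots> = (\<Sum>g\<in>carrier G. \<Sum>h\<in>carrier G. \<bar>tr g h\<bar>)"
    by (subst sum.swap) (intro sum.cong refl, simp add: X_def Tc_eq)
  also have "\<dots> = (\<Sum>g\<in>carrier G. (2 * real m ^ 2 - 1) * real n - 2 * (real m ^ 2 - 1) * real a * real (card (conj_class G g)))"
    using tr_rowsum by simp
  also have "\<dots> = (2 * real m ^ 2 - 1) * (real n)^2 - 2 * (real m ^ 2 - 1) * real a * (\<Sum>g\<in>carrier G. real (card (conj_class G g)))"
    by (simp add: sum_subtractf sum_distrib_left power2_eq_square)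
  finally have e: "(\<Sum>C\<in>Conj G. \<Sum>C'\<in>Conj G. real (card C) * real (card C') * X C C') = \<dots>" .
  show ?thesis unfolding AMZL_def X_def[symmetric] e using n0 by (simp add: field_simps)
qed

end

context amz begin

abbreviation "x \<equiv> card (Irr G)"
abbreviation "k \<equiv> card ZZ"

lemma Lin_sub: "Lin \<subseteq> Irr G" unfolding Lin_def by auto

lemma dr_Lin: "\<chi> \<in> Irr G \<Longrightarrow> dr \<chi> = (if \<chi> \<in> Lin then 1 else real m)"
  unfolding dr_def Lin_def by auto

lemma sum_dr_pow:
  "(\<Sum>\<chi>\<in>Irr G. (dr \<chi>)^p) = real a + (real m)^p * (real x - real a)"
proof -
  have finI: "finite (Irr G)" by (rule Irr_finite[OF fin])
  have "(\<Sum>\<chi>\<in>Irr G. (dr \<chi>)^p) = (\<Sum>\<chi>\<in>Lin. (dr \<chi>)^p) + (\<Sum>\<chi>\<in>Irr G - Lin. (dr \<chi>)^p)"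
    using sum.subset_diff[OF Lin_sub finI] by (simp add: add.commute)
  also have "(\<Sum>\<chi>\<in>Lin. (dr \<chi>)^p) = real a" using dr_Lin Lin_sub by (simp add: subset_iff)
  also have "(\<Sum>\<chi>\<in>Irr G - Lin. (dr \<chi>)^p) = real (card (Irr G - Lin)) * (real m)^p" using dr_Lin by simp
  also have "card (Irr G - Lin) = x - a" using card_Diff_subset[OF finite_subset[OF Lin_sub finI] Lin_sub] .
  also have "real (x - a) = real x - real a" using card_mono[OF finI Lin_sub] by simp
  finally show ?thesis by simp
qed

lemma sum_cs: "(\<Sum>g\<in>carrier G. real (card (conj_class G g))) = real k + real s * (real n - real k)"
proof -
  have sub: "ZZ \<subseteq> carrier G" using ZZ_carrier by auto
  have "(\<Sum>g\<in>carrier G. real (card (conj_class G g))) = (\<Sum>g\<in>ZZ. real (card (conj_class G g))) + (\<Sum>g\<in>carrier G - ZZ. real (card (conj_class G g)))"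
    using sum.subset_diff[OF sub fin] by (simp add: add.commute)
  also have "(\<Sum>g\<in>ZZ. real (card (conj_class G g))) = real k" using cls_card sub by (simp add: subset_iff)
  also have "(\<Sum>g\<in>carrier G - ZZ. real (card (conj_class G g))) = real (card (carrier G - ZZ)) * real s" using cls_card by simp
  also have "card (carrier G - ZZ) = n - k" using card_Diff_subset[OF finite_subset[OF sub fin] sub] .
  also have "real (n - k) = real n - real k" using card_mono[OF fin sub] by simp
  finally show ?thesis by simp
qed

lemma x_eq: "real s * real x = real s * real k + (real n - real k)"
proof -
  have finI: "finite (Irr G)" by (rule Irr_finite[OF fin])
  have sub: "ZZ \<subseteq> carrier G" using ZZ_carrier by auto
  have "(\<Sum>g\<in>carrier G. \<Sum>\<chi>\<in>Irr G. \<chi> g * cnj (\<chi> g)) = (\<Sum>\<chi>\<in>Irr G. \<Sum>g\<in>carrier G. \<chi> g * cnj (\<chi> g))"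
    by (rule sum.swap)
  also have "\<dots> = (\<Sum>\<chi>\<in>Irr G. of_nat n)" using row_orth[OF fin] by simp
  finally have e1: "(\<Sum>g\<in>carrier G. \<Sum>\<chi>\<in>Irr G. \<chi> g * cnj (\<chi> g)) = of_nat x * of_nat n" by simp
  have e2: "(\<Sum>\<chi>\<in>Irr G. \<chi> g * cnj (\<chi> g)) = of_real (real n / real (card (conj_class G g)))" if g: "g \<in> carrier G" for g
    using col_orth[OF fin g g] cc_self[OF g] by simp
  have "complex_of_real (\<Sum>g\<in>carrier G. real n / real (card (conj_class G g))) = complex_of_real (real x * real n)"
    using e1 e2 by (simp add: of_real_sum)
  hence e3: "(\<Sum>g\<in>carrier G. real n / real (card (conj_class G g))) = real x * real n" by (simp only: of_real_eq_iff)
  have "(\<Sum>g\<in>carrier G. real n / real (card (conj_class G g))) =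
      (\<Sum>g\<in>ZZ. real n / real (card (conj_class G g))) + (\<Sum>g\<in>carrier G - ZZ. real n / real (card (conj_class G g)))"
    using sum.subset_diff[OF sub fin] by (simp add: add.commute)
  also have "(\<Sum>g\<in>ZZ. real n / real (card (conj_class G g))) = real k * real n" using cls_card sub by (simp add: subset_iff)
  also have "(\<Sum>g\<in>carrier G - ZZ. real n / real (card (conj_class G g))) = real (card (carrier G - ZZ)) * (real n / real s)"
    using cls_card by simp
  also have "card (carrier G - ZZ) = n - k" using card_Diff_subset[OF finite_subset[OF sub fin] sub] .
  also have "real (n - k) = real n - real k" using card_mono[OF fin sub] by simp
  finally have e4: "real x * real n = real k * real n + (real n - real k) * (real n / real s)" using e3 by simp
  have sy: "real s * (real n / real s) = real n" using s_pos by simp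
  have "real s * (real x * real n) = real s * (real k * real n) + (real n - real k) * (real s * (real n / real s))"
    unfolding e4 by (simp add: algebra_simps)
  hence "real s * (real x * real n) = real s * (real k * real n) + (real n - real k) * real n" unfolding sy .
  hence "(real s * real x - (real s * real k + (real n - real k))) * real n = 0" by (simp add: algebra_simps)
  thus ?thesis using n0 by simp
qed

lemma final_eq: "AMZA G = AMZL G"
proof -
  define M where "M = (real m)^2"
  define N where "N = real n"
  define K where "K = real k"
  define A where "A = real a"
  define X where "X = real x"
  define S where "S = real s"
  have h1: "A + M * (X - A) = N" using sum_dr_pow[of 2] sum_dr2 unfolding M_def N_def A_def X_def by simp
  have d4: "(\<Sum>\<chi>\<in>Irr G. (dr \<chi>)^4) = A + M * (N - A)"
  proof -
    have "(real m)^4 = M * M" unfolding M_def by (simp add: power4_eq_xxxx power2_eq_square)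
    hence "(\<Sum>\<chi>\<in>Irr G. (dr \<chi>)^4) = A + M * (M * (X - A))" using sum_dr_pow[of 4] unfolding A_def X_def by simp
    also have "M * (X - A) = N - A" using h1 by simp
    finally show ?thesis .
  qed
  have h2: "S * X = S * K + (N - K)" using x_eq unfolding S_def X_def K_def N_def .
  have R: "S * (M - 1) * A - M * (S - 1) * K - (M - S) * N = 0"
  proof -
    have "S * N = S * A + S * (M * (X - A))" using h1 by (metis distrib_left)
    moreover have "M * (S * X) = M * (S * K + (N - K))" using h2 by simp
    ultimately show ?thesis by (simp add: algebra_simps)
  qed
  have cs: "(\<Sum>g\<in>carrier G. real (card (conj_class G g))) = K + S * (N - K)" using sum_cs unfolding K_def S_def N_def .
  have "AMZA G * N^2 = (2 * S - 1) * N^2 - 2 * (S - 1) * K * (A + M * (N - A))"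
    using AMZA_val d4 unfolding S_def N_def K_def by simp
  moreover have "AMZL G * N^2 = (2 * M - 1) * N^2 - 2 * (M - 1) * A * (K + S * (N - K))"
    using AMZL_val cs unfolding M_def N_def A_def S_def by simp
  moreover have "(2 * S - 1) * N^2 - 2 * (S - 1) * K * (A + M * (N - A)) - ((2 * M - 1) * N^2 - 2 * (M - 1) * A * (K + S * (N - K)))
      = 2 * N * (S * (M - 1) * A - M * (S - 1) * K - (M - S) * N)"
    by (simp add: algebra_simps power2_eq_square)
  ultimately have "AMZA G * N^2 = AMZL G * N^2" using R by simp
  moreover have "N^2 > 0" unfolding N_def using n0 by simp
  ultimately show ?thesis by simp
qed

end

theorem theorem4p6:
  fixes G :: "'a monoid" and m s :: nat
  assumes "group G" and "finite (carrier G)"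
    and "cd G = {1, m}" and "cc G = {1, s}"
  shows "AMZA G = AMZL G"
proof -
  interpret amz G m s using assms unfolding amz_def amz_axioms_def grp_def by simp
  show ?thesis by (rule final_eq)
qed

end
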